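(* Let $R$ be a commutative ring, $A=R[\mathbb{Z}]=R[t,t^{-1}]$, and let $a\in HH_1(A;A)$ correspond to $ut^k\in A$ with $u\in R^\times$ and $k\in\mathbb{Z}$. Then $\rho_a:HH^*(A;A)\to HH_{1-*}(A;A)$, $b\mapsto\rho(a\otimes b)$, is an isomorphism, and with $\Delta_a=\rho_a^{-1}B\rho_a$ one has, as BV-algebras, $$HH^*(A;A)\cong R[x,x^{-1}]\otimes\Lambda(y),\qquad\Delta_a(x^i)=0,\qquad\Delta_a(yx^i)=(i+k)x^{i-1},$$ where $x^{\pm1}\in HH^0(A;A)$ are the classes of $t^{\pm1}$ and $y\in HH^1(A;A)$ is the class of $1\in A$ (represented by the derivation $t^j\mapsto -jt^{j-1}$).
   Context: $HH_*$ and $HH^*$ are computed from the $A^e$-resolution $0\to A\otimes A\xrightarrow{d_1}A\otimes A\xrightarrow{\mu}A\to0$, $d_1(a\otimes b)=(a\otimes b)(1\otimes t-t\otimes1)$, giving $HH_i(A;A)=HH^i(A;A)=A$ for $i=0,1$ and $0$ otherwise; under this, $c\in A=HH_1(A;A)$ corresponds to the class of the normalized Hochschild $1$-chain $-t\otimes c\in\bar A\otimes A$. $B$ is the Connes operator $B(a_1\otimes\cdots\otimes a_n\otimes a)=\sum_{i=0}^n(-1)^{in}a_i\otimes\cdots\otimes a_n\otimes a\otimes a_1\otimes\cdots\otimes a_{i-1}\otimes1$ ($a_0:=a$), and $\rho$ is the action $(a_1\otimes\cdots\otimes a_p\otimes a)\cdot f=(-1)^{pq}a_{q+1}\otimes\cdots\otimes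 a_p\otimes af(a_1,\dots,a_q)$ of $HH^q$ on $HH_p$. A BV-algebra is a graded commutative algebra with degree $-1$ operator $\Delta$, $\Delta^2=0$, whose derivation defect is a Gerstenhaber bracket. *)

theory Defs
  imports Main
begin

text \<open>
  Concrete model of the normalized Hochschild complexes of the Laurent polynomial
  ring A = R[t,t^-1] over a commutative ring R (type 'r), using the R-basis
  t^j (j :: int) of A and the basis t^j, j ~= 0, of Abar = A/R.

  * A Laurent polynomial is a finitely supported function int => 'r (coefficient of t^i).
  * A normalized Hochschild n-chain in Abar^(n) (x) A is a finitely supported function
    int list => 'r, supported on words [j1,...,jn,j0] (encoding t^j1 (x) ... (x) t^jn (x) t^j0)
    with j1,...,jn nonzero.
  * A normalized Hochschild q-cochain (an R-linear map Abar^(q) => A) is a function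
    int list => int => 'r whose value on a word [j1..jq] of nonzero integers is the Laurent
    polynomial f(t^j1,...,t^jq), and which is 0 on all other words.
\<close>

definition lps :: "(int \<Rightarrow> 'r::comm_ring_1) set" where
  "lps = {p. finite {i. p i \<noteq> 0}}"

definition tpow :: "int \<Rightarrow> int \<Rightarrow> 'r::comm_ring_1" where
  "tpow j = (\<lambda>i. if i = j then 1 else 0)"

definition lmul :: "(int \<Rightarrow> 'r::comm_ring_1) \<Rightarrow> (int \<Rightarrow> 'r) \<Rightarrow> int \<Rightarrow> 'r" where
  "lmul p q = (\<lambda>i. \<Sum>j\<in>{j. p j \<noteq> 0}. p j * q (i - j))"

definition lsmult :: "'r::comm_ring_1 \<Rightarrow> (int \<Rightarrow> 'r) \<Rightarrow> int \<Rightarrow> 'r" where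
  "lsmult r p = (\<lambda>i. r * p i)"

definition lshift :: "int \<Rightarrow> (int \<Rightarrow> 'r::comm_ring_1) \<Rightarrow> int \<Rightarrow> 'r" where
  "lshift a p = (\<lambda>i. p (i - a))"   \<comment> \<open>multiplication by t^a\<close>

definition chainsN :: "nat \<Rightarrow> (int list \<Rightarrow> 'r::comm_ring_1) set" where
  "chainsN n = {c. finite {w. c w \<noteq> 0} \<and>
      (\<forall>w. c w \<noteq> 0 \<longrightarrow> length w = Suc n \<and> (\<forall>i<n. w ! i \<noteq> 0))}"

definition chains :: "int \<Rightarrow> (int list \<Rightarrow> 'r::comm_ring_1) set" where
  "chains n = (if n < 0 then {\<lambda>_. 0} else chainsN (nat n))"

text \<open>Normalized basis element of a word [j1..jn,j0]; zero if some jm (m \<le> n) is 0,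
  since then the corresponding tensor factor is 1 = 0 in Abar.\<close>
definition bas :: "int list \<Rightarrow> int list \<Rightarrow> 'r::comm_ring_1" where
  "bas w = (if (\<forall>i < length w - 1. w ! i \<noteq> 0) then (\<lambda>v. if v = w then 1 else 0) else (\<lambda>v. 0))"

definition linext :: "(int list \<Rightarrow> int list \<Rightarrow> 'r::comm_ring_1) \<Rightarrow> (int list \<Rightarrow> 'r) \<Rightarrow> int list \<Rightarrow> 'r" where
  "linext g c = (\<lambda>v. \<Sum>w\<in>{w. c w \<noteq> 0}. c w * g w v)"

text \<open>Face maps on a word w = [a1,...,an,a0] (positions 0..n):
  d_0(a1 (x) ... (x) an (x) a) = a2 (x) ... (x) an (x) a a1,
  d_i = multiply a_i a_(i+1)  (1 \<le> i \<le> n-1),  d_n = a1 (x) ... (x) a_(n-1) (x) a_n a.\<close>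
definition face :: "nat \<Rightarrow> int list \<Rightarrow> int list" where
  "face i w = (if i = 0 then butlast (tl w) @ [last w + hd w]
               else take (i - 1) w @ [w ! (i - 1) + w ! i] @ drop (i + 1) w)"

definition bd_word :: "int list \<Rightarrow> int list \<Rightarrow> 'r::comm_ring_1" where
  "bd_word w = (let n = length w - 1 in
     if n = 0 then (\<lambda>v. 0) else (\<lambda>v. \<Sum>i = 0..n. (-1) ^ i * bas (face i w) v))"

definition bd :: "int \<Rightarrow> (int list \<Rightarrow> 'r::comm_ring_1) \<Rightarrow> int list \<Rightarrow> 'r" where
  "bd n c = (if n \<le> 0 then (\<lambda>v. 0) else linext bd_word c)"

text \<open>Connes operator
  B(a1 (x) ... (x) an (x) a) = sum_(i=0..n) (-1)^(i n) a_i (x) ... (x) a_n (x) a_0 (x) a_1 (x) ... (x) a_(i-1) (x) 1,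
  with a_0 = a (for i = 0 the term is a_0 (x) a_1 (x) ... (x) a_n (x) 1).\<close>
definition connesB_word :: "int list \<Rightarrow> int list \<Rightarrow> 'r::comm_ring_1" where
  "connesB_word w = (let n = length w - 1 in
     (\<lambda>v. \<Sum>i = 0..n. (-1) ^ (i * n) *
        bas ((if i = 0 then rotate n w else rotate (i - 1) w) @ [0]) v))"

definition connesB :: "int \<Rightarrow> (int list \<Rightarrow> 'r::comm_ring_1) \<Rightarrow> int list \<Rightarrow> 'r" where
  "connesB n c = (if n < 0 then (\<lambda>v. 0) else linext connesB_word c)"

definition cycles :: "int \<Rightarrow> (int list \<Rightarrow> 'r::comm_ring_1) set" where
  "cycles n = {c \<in> chains n. bd n c = (\<lambda>v. 0)}"

definition boundaries :: "int \<Rightarrow> (int list \<Rightarrow> 'r::comm_ring_1) set" where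
  "boundaries n = bd (n + 1) ` chains (n + 1)"

definition hclass :: "int \<Rightarrow> (int list \<Rightarrow> 'r::comm_ring_1) \<Rightarrow> (int list \<Rightarrow> 'r) set" where
  "hclass n c = {c' \<in> chains n. (\<lambda>v. c' v - c v) \<in> boundaries n}"

definition HHho :: "int \<Rightarrow> (int list \<Rightarrow> 'r::comm_ring_1) set set" where
  "HHho n = hclass n ` cycles n"

definition cochains :: "nat \<Rightarrow> (int list \<Rightarrow> int \<Rightarrow> 'r::comm_ring_1) set" where
  "cochains q = {f. (\<forall>as. f as \<in> lps) \<and>
      (\<forall>as. f as \<noteq> (\<lambda>i. 0) \<longrightarrow> length as = q \<and> (\<forall>a\<in>set as. a \<noteq> 0))}"

definition cobd :: "nat \<Rightarrow> (int list \<Rightarrow> int \<Rightarrow> 'r::comm_ring_1) \<Rightarrow> int list \<Rightarrow> int \<Rightarrow> 'r" where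
  "cobd q f = (\<lambda>as. if length as = Suc q \<and> (\<forall>a\<in>set as. a \<noteq> 0) then
      (\<lambda>i. lshift (hd as) (f (tl as)) i
         + (\<Sum>j = 1..q. (-1) ^ j * f (take (j - 1) as @ [as ! (j - 1) + as ! j] @ drop (j + 1) as) i)
         + (-1) ^ Suc q * lshift (last as) (f (butlast as)) i)
    else (\<lambda>i. 0))"

definition cocycles :: "nat \<Rightarrow> (int list \<Rightarrow> int \<Rightarrow> 'r::comm_ring_1) set" where
  "cocycles q = {f \<in> cochains q. cobd q f = (\<lambda>as i. 0)}"

definition coboundaries :: "nat \<Rightarrow> (int list \<Rightarrow> int \<Rightarrow> 'r::comm_ring_1) set" where
  "coboundaries q = (if q = 0 then {\<lambda>as i. 0} else cobd (q - 1) ` cochains (q - 1))"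

definition coclass :: "nat \<Rightarrow> (int list \<Rightarrow> int \<Rightarrow> 'r::comm_ring_1) \<Rightarrow> (int list \<Rightarrow> int \<Rightarrow> 'r) set" where
  "coclass q f = {f' \<in> cochains q. (\<lambda>as i. f' as i - f as i) \<in> coboundaries q}"

definition HHco :: "nat \<Rightarrow> (int list \<Rightarrow> int \<Rightarrow> 'r::comm_ring_1) set set" where
  "HHco q = coclass q ` cocycles q"

definition cup :: "nat \<Rightarrow> nat \<Rightarrow> (int list \<Rightarrow> int \<Rightarrow> 'r::comm_ring_1) \<Rightarrow> (int list \<Rightarrow> int \<Rightarrow> 'r)
     \<Rightarrow> int list \<Rightarrow> int \<Rightarrow> 'r" where
  "cup p q f g = (\<lambda>as. if length as = p + q then lmul (f (take p as)) (g (drop p as)) else (\<lambda>i. 0))"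

text \<open>(a1 (x) ... (x) ap (x) a) . f = (-1)^(pq) a_(q+1) (x) ... (x) a_p (x) a f(a1,...,aq).\<close>
definition cap_word :: "nat \<Rightarrow> (int list \<Rightarrow> int \<Rightarrow> 'r::comm_ring_1) \<Rightarrow> int list \<Rightarrow> int list \<Rightarrow> 'r" where
  "cap_word q f w = (let p = length w - 1 in
     if q \<le> p then (\<lambda>v. (-1) ^ (p * q) *
        (\<Sum>i\<in>{i. f (take q w) i \<noteq> 0}. f (take q w) i * bas (drop q (butlast w) @ [last w + i]) v))
     else (\<lambda>v. 0))"

definition cap :: "(int list \<Rightarrow> 'r::comm_ring_1) \<Rightarrow> nat \<Rightarrow> (int list \<Rightarrow> int \<Rightarrow> 'r) \<Rightarrow> int list \<Rightarrow> 'r" where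
  "cap c q f = linext (\<lambda>w. cap_word q f w) c"

definition induced :: "('b \<Rightarrow> 'c set) \<Rightarrow> ('a \<Rightarrow> 'b) \<Rightarrow> 'a set \<Rightarrow> 'c set" where
  "induced cls F X = cls (F (SOME x. x \<in> X))"

text \<open>The class a \<in> HH_1(A;A) corresponding to u t^k \<in> A is represented by the normalized
  1-chain - t (x) u t^k, i.e. the word [1,k] with coefficient -u.\<close>
definition a_rep :: "'r::comm_ring_1 \<Rightarrow> int \<Rightarrow> int list \<Rightarrow> 'r" where
  "a_rep u k = (\<lambda>v. if v = [1, k] then - u else 0)"

definition rhoHH :: "'r::comm_ring_1 \<Rightarrow> int \<Rightarrow> nat \<Rightarrow> (int list \<Rightarrow> int \<Rightarrow> 'r) set \<Rightarrow> (int list \<Rightarrow> 'r) set" where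
  "rhoHH u k q = induced (hclass (1 - int q)) (cap (a_rep u k) q)"

definition BHH :: "int \<Rightarrow> (int list \<Rightarrow> 'r::comm_ring_1) set \<Rightarrow> (int list \<Rightarrow> 'r) set" where
  "BHH n = induced (hclass (n + 1)) (connesB n)"

definition DeltaHH :: "'r::comm_ring_1 \<Rightarrow> int \<Rightarrow> nat \<Rightarrow> (int list \<Rightarrow> int \<Rightarrow> 'r) set \<Rightarrow> (int list \<Rightarrow> int \<Rightarrow> 'r) set" where
  "DeltaHH u k q X = the_inv_into (HHco (q - 1)) (rhoHH u k (q - 1)) (BHH (1 - int q) (rhoHH u k q X))"

definition cupHH :: "nat \<Rightarrow> nat \<Rightarrow> (int list \<Rightarrow> int \<Rightarrow> 'r::comm_ring_1) set \<Rightarrow> (int list \<Rightarrow> int \<Rightarrow> 'r) set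
    \<Rightarrow> (int list \<Rightarrow> int \<Rightarrow> 'r) set" where
  "cupHH p q X Y = coclass (p + q) (cup p q (SOME f. f \<in> X) (SOME g. g \<in> Y))"

definition addHH :: "nat \<Rightarrow> (int list \<Rightarrow> int \<Rightarrow> 'r::comm_ring_1) set \<Rightarrow> (int list \<Rightarrow> int \<Rightarrow> 'r) set
    \<Rightarrow> (int list \<Rightarrow> int \<Rightarrow> 'r) set" where
  "addHH q X Y = coclass q (\<lambda>as i. (SOME f. f \<in> X) as i + (SOME g. g \<in> Y) as i)"

definition smultHH :: "nat \<Rightarrow> 'r::comm_ring_1 \<Rightarrow> (int list \<Rightarrow> int \<Rightarrow> 'r) set \<Rightarrow> (int list \<Rightarrow> int \<Rightarrow> 'r) set" where
  "smultHH q r X = coclass q (\<lambda>as i. r * (SOME f. f \<in> X) as i)"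

definition cochain0 :: "(int \<Rightarrow> 'r::comm_ring_1) \<Rightarrow> int list \<Rightarrow> int \<Rightarrow> 'r" where
  "cochain0 p = (\<lambda>as. if as = [] then p else (\<lambda>i. 0))"

definition yder :: "int list \<Rightarrow> int \<Rightarrow> 'r::comm_ring_1" where
  "yder = (\<lambda>as. if length as = 1 \<and> hd as \<noteq> 0
               then (\<lambda>i. if i = hd as - 1 then - of_int (hd as) else 0) else (\<lambda>i. 0))"

end

theory Submission
  imports Defs
begin

definition nrm :: "int list \<Rightarrow> bool" where
  "nrm w = (\<forall>i < length w - 1. w ! i \<noteq> 0)"

lemma bas_nrm: "nrm w \<Longrightarrow> bas w = (\<lambda>v. if v = w then 1 else 0)"
  by (simp add: bas_def nrm_def)
lemma bas_nnrm: "\<not> nrm w \<Longrightarrow> bas w = (\<lambda>v. 0)"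
  by (auto simp add: bas_def nrm_def)
lemma bas_alt: "bas w v = (if nrm w \<and> v = w then 1 else 0)"
  by (simp add: bas_def nrm_def)

lemma linext_sup:
  assumes "finite S" "{w. c w \<noteq> 0} \<subseteq> S"
  shows "linext g c v = (\<Sum>w\<in>S. c w * g w v)"
  unfolding linext_def
  by (rule sum.mono_neutral_left) (use assms in auto)

lemma linext_fsum:
  fixes c :: "'a \<Rightarrow> 'r::comm_ring_1"
  assumes J: "finite J"
  shows "linext g (\<lambda>v. \<Sum>j\<in>J. c j * bas (W j) v) x =
         (\<Sum>j\<in>J. c j * (if nrm (W j) then g (W j) x else 0))"
proof -
  let ?c = "\<lambda>v. \<Sum>j\<in>J. c j * bas (W j) v"
  have sub: "{w. ?c w \<noteq> 0} \<subseteq> W ` J"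
  proof
    fix w assume "w \<in> {w. ?c w \<noteq> 0}"
    then obtain j where "j \<in> J" "c j * bas (W j) w \<noteq> 0"
      by (metis (mono_tags, lifting) mem_Collect_eq sum.neutral)
    then show "w \<in> W ` J" by (auto simp: bas_alt split: if_splits)
  qed
  have "linext g ?c x = (\<Sum>w\<in>W ` J. ?c w * g w x)"
    by (rule linext_sup) (use J sub in auto)
  also have "\<dots> = (\<Sum>w\<in>W ` J. \<Sum>j\<in>{j\<in>J. W j = w}. c j * (if nrm (W j) then g (W j) x else 0))"
  proof (rule sum.cong[OF refl])
    fix w assume "w \<in> W ` J"
    have "?c w * g w x = (\<Sum>j\<in>J. c j * bas (W j) w * g w x)"
      by (simp add: sum_distrib_right)
    also have "\<dots> = (\<Sum>j\<in>{j\<in>J. W j = w}. c j * bas (W j) w * g w x)"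
      by (rule sum.mono_neutral_right) (use J in \<open>auto simp: bas_alt\<close>)
    also have "\<dots> = (\<Sum>j\<in>{j\<in>J. W j = w}. c j * (if nrm (W j) then g (W j) x else 0))"
      by (rule sum.cong) (auto simp: bas_alt)
    finally show "?c w * g w x = \<dots>" .
  qed
  also have "\<dots> = (\<Sum>j\<in>J. c j * (if nrm (W j) then g (W j) x else 0))"
    by (rule sum.image_gen[symmetric]) (rule J)
  finally show ?thesis .
qed

lemma lps_iff: "p \<in> lps \<longleftrightarrow> finite {i. p i \<noteq> 0}"
  by (simp add: lps_def)

lemma lps_zero[simp]: "(\<lambda>i. 0) \<in> lps"
  by (simp add: lps_def)

lemma lps_add: "p \<in> lps \<Longrightarrow> q \<in> lps \<Longrightarrow> (\<lambda>i. p i + q i) \<in> lps"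
  unfolding lps_def by (auto intro: finite_subset[of _ "{i. p i \<noteq> 0} \<union> {i. q i \<noteq> 0}"])

lemma lps_scale: "p \<in> lps \<Longrightarrow> (\<lambda>i. r * p i) \<in> lps"
  unfolding lps_def by (auto intro: finite_subset[of _ "{i. p i \<noteq> 0}"])

lemma lps_diff: "p \<in> lps \<Longrightarrow> q \<in> lps \<Longrightarrow> (\<lambda>i. p i - q i) \<in> lps"
  using lps_add[of p "\<lambda>i. (-1) * q i"] lps_scale[of q "-1"] by simp

lemma lps_shift: "p \<in> lps \<Longrightarrow> lshift a p \<in> lps"
proof -
  assume "p \<in> lps"
  then have "finite ((\<lambda>i. i + a) ` {i. p i \<noteq> 0})" by (simp add: lps_def)
  moreover have "{i. lshift a p i \<noteq> 0} \<subseteq> (\<lambda>i. i + a) ` {i. p i \<noteq> 0}"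
    by (auto simp: lshift_def image_iff intro!: exI[of _ "_ - a"])
  ultimately show ?thesis by (auto simp: lps_def intro: finite_subset)
qed

lemma lps_scshift: "p \<in> lps \<Longrightarrow> (\<lambda>i. c * p (i - s)) \<in> lps"
  using lps_scale[OF lps_shift[of p s], of c] by (simp add: lshift_def)

lemma lps_sum: "finite J \<Longrightarrow> (\<forall>j\<in>J. P j \<in> lps) \<Longrightarrow> (\<lambda>i. \<Sum>j\<in>J. P j i) \<in> lps"
proof (induction J rule: finite_induct)
  case empty then show ?case by simp
next
  case (insert x F)
  then show ?case using lps_add[of "P x" "\<lambda>i. \<Sum>j\<in>F. P j i"] by simp
qed

lemma lps_tpow[simp]: "tpow j \<in> lps"
  by (simp add: lps_def tpow_def)

lemma lsmult_lps: "p \<in> lps \<Longrightarrow> lsmult r p \<in> lps"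
  by (simp add: lsmult_def lps_scale)

lemma lmul_sup:
  assumes "finite S" "{j. p j \<noteq> 0} \<subseteq> S"
  shows "lmul p q i = (\<Sum>j\<in>S. p j * q (i - j))"
  unfolding lmul_def by (rule sum.mono_neutral_left) (use assms in auto)

lemma lps_lmul:
  assumes p: "p \<in> lps" and q: "q \<in> lps"
  shows "lmul p q \<in> lps"
proof -
  let ?S = "{j. p j \<noteq> 0}" and ?T = "{j. q j \<noteq> 0}"
  have fin: "finite ((\<lambda>(a,b). a + b) ` (?S \<times> ?T))" using p q by (simp add: lps_def)
  have "{i. lmul p q i \<noteq> 0} \<subseteq> (\<lambda>(a,b). a + b) ` (?S \<times> ?T)"
  proof
    fix i assume "i \<in> {i. lmul p q i \<noteq> 0}"
    then obtain j where "p j \<noteq> 0" "q (i - j) \<noteq> 0" unfolding lmul_def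
      by (metis (mono_tags, lifting) mem_Collect_eq mult_zero_right sum.neutral)
    then have "(j, i - j) \<in> ?S \<times> ?T" by simp
    then show "i \<in> (\<lambda>(a,b). a + b) ` (?S \<times> ?T)"
      by (rule rev_image_eqI) simp
  qed
  then show ?thesis using fin by (auto simp: lps_def intro: finite_subset)
qed

lemma lmul_comm:
  assumes p: "p \<in> lps" and q: "q \<in> lps"
  shows "lmul p q = lmul q (p :: int \<Rightarrow> 'r::comm_ring_1)"
proof
  fix i
  let ?S = "{j. p j \<noteq> 0}" and ?T = "{j. q j \<noteq> 0}"
  let ?U = "?S \<union> (\<lambda>k. i - k) ` ?T"
  have fS: "finite ?S" "finite ?T" using p q by (auto simp: lps_def)
  have "lmul p q i = (\<Sum>j\<in>?U. p j * q (i - j))"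
    by (rule lmul_sup) (use fS in auto)
  also have "\<dots> = (\<Sum>k\<in>(\<lambda>j. i - j) ` ?U. q k * p (i - k))"
    by (subst sum.reindex) (auto simp: inj_on_def mult.commute)
  also have "\<dots> = lmul q p i"
  proof (rule lmul_sup[symmetric])
    show "finite ((\<lambda>j. i - j) ` ?U)" using fS by simp
    show "{j. q j \<noteq> 0} \<subseteq> (\<lambda>j. i - j) ` ?U"
    proof
      fix x assume "x \<in> {j. q j \<noteq> 0}"
      then have "i - x \<in> ?U" by (auto intro: rev_image_eqI[of x])
      then show "x \<in> (\<lambda>j. i - j) ` ?U" by (rule rev_image_eqI) simp
    qed
  qed
  finally show "lmul p q i = lmul q p i" .
qed

lemma lmul_scshift_right:
  "lmul p (\<lambda>i. c * q (i - s)) = (\<lambda>i. c * lmul p q (i - s))"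
  unfolding lmul_def by (auto simp: sum_distrib_left algebra_simps intro!: sum.cong)

lemma lmul_scshift_left:
  assumes p: "p \<in> lps"
  shows "lmul (\<lambda>i. c * p (i - s)) q = (\<lambda>i. c * lmul p q (i - s))"
proof
  fix i
  let ?S = "{j. p j \<noteq> 0}"
  have fS: "finite ?S" using p by (simp add: lps_def)
  have "lmul (\<lambda>i. c * p (i - s)) q i = (\<Sum>j\<in>(\<lambda>j. j + s) ` ?S. c * p (j - s) * q (i - j))"
  proof (rule lmul_sup)
    show "finite ((\<lambda>j. j + s) ` ?S)" using fS by simp
    show "{j. c * p (j - s) \<noteq> 0} \<subseteq> (\<lambda>j. j + s) ` ?S"
    proof
      fix x assume "x \<in> {j. c * p (j - s) \<noteq> 0}"
      then have "x - s \<in> ?S" by auto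
      then show "x \<in> (\<lambda>j. j + s) ` ?S" by (rule rev_image_eqI) simp
    qed
  qed
  also have "\<dots> = (\<Sum>j\<in>?S. c * p j * q (i - s - j))"
    by (subst sum.reindex) (auto simp: inj_on_def algebra_simps)
  also have "\<dots> = c * lmul p q (i - s)"
    unfolding lmul_def by (simp add: sum_distrib_left mult.assoc)
  finally show "lmul (\<lambda>i. c * p (i - s)) q i = c * lmul p q (i - s)" .
qed

lemma lmul_add_right: "lmul p (\<lambda>i. q i + q' i) = (\<lambda>i. lmul p q i + lmul p q' i)"
  unfolding lmul_def by (auto simp: sum.distrib algebra_simps)

lemma chains_nonneg: "n \<ge> 0 \<Longrightarrow> chains n = chainsN (nat n)"
  by (simp add: chains_def)

lemma chainsN_add: "c1 \<in> chainsN n \<Longrightarrow> c2 \<in> chainsN n \<Longrightarrow> (\<lambda>v. c1 v + c2 v) \<in> chainsN n"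
  unfolding chainsN_def
  by (auto intro: finite_subset[of _ "{w. c1 w \<noteq> 0} \<union> {w. c2 w \<noteq> 0}"])
     (metis add.right_neutral add_0)+

lemma chainsN_scale: "c \<in> chainsN n \<Longrightarrow> (\<lambda>v. r * c v) \<in> chainsN n"
  unfolding chainsN_def by (auto intro: finite_subset[of _ "{w. c w \<noteq> 0}"]) (metis mult_zero_right)+

lemma chainsN_zero: "(\<lambda>v. 0) \<in> chainsN n"
  by (simp add: chainsN_def)

lemma chainsN_sum: "finite J \<Longrightarrow> (\<forall>j\<in>J. C j \<in> chainsN n) \<Longrightarrow> (\<lambda>v. \<Sum>j\<in>J. C j v) \<in> chainsN n"
proof (induction J rule: finite_induct)
  case empty then show ?case by (simp add: chainsN_zero)
next
  case (insert x F) then show ?case using chainsN_add[of "C x" n "\<lambda>v. \<Sum>j\<in>F. C j v"] by simp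
qed

lemma bas_chainsN: "length w = Suc n \<Longrightarrow> bas w \<in> chainsN n"
  unfolding chainsN_def bas_def by auto

lemma chainsN_fin: "c \<in> chainsN n \<Longrightarrow> finite {w. c w \<noteq> 0}"
  by (simp add: chainsN_def)

lemma chainsN_decomp:
  assumes "c \<in> chainsN n"
  shows "c = (\<lambda>v. \<Sum>w\<in>{w. c w \<noteq> 0}. c w * bas w v)"
proof
  fix v
  have fin: "finite {w. c w \<noteq> 0}" using assms by (simp add: chainsN_def)
  show "c v = (\<Sum>w\<in>{w. c w \<noteq> 0}. c w * bas w v)"
  proof (cases "c v = 0")
    case True
    then show ?thesis by (auto simp: bas_alt intro!: sum.neutral)
  next
    case False
    then have "nrm v" using assms unfolding chainsN_def nrm_def by auto
    have "(\<Sum>w\<in>{w. c w \<noteq> 0}. c w * bas w v) = (\<Sum>w\<in>{v}. c w * bas w v)"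
      by (rule sum.mono_neutral_right) (use fin False in \<open>auto simp: bas_alt\<close>)
    then show ?thesis using \<open>nrm v\<close> by (simp add: bas_alt)
  qed
qed

lemma linext_add:
  assumes "finite {w. c1 w \<noteq> 0}" "finite {w. c2 w \<noteq> 0}"
  shows "linext g (\<lambda>v. c1 v + c2 v) x = linext g c1 x + linext g c2 x"
proof -
  let ?S = "{w. c1 w \<noteq> 0} \<union> {w. c2 w \<noteq> 0}"
  have f: "finite ?S" using assms by simp
  have "linext g (\<lambda>v. c1 v + c2 v) x = (\<Sum>w\<in>?S. (c1 w + c2 w) * g w x)"
    by (rule linext_sup) (use f in auto)
  also have "\<dots> = (\<Sum>w\<in>?S. c1 w * g w x) + (\<Sum>w\<in>?S. c2 w * g w x)"
    by (simp add: sum.distrib algebra_simps)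
  also have "\<dots> = linext g c1 x + linext g c2 x"
    by (subst (1 2) linext_sup[of ?S]) (use f in auto)
  finally show ?thesis .
qed

lemma linext_scale:
  assumes "finite {w. c w \<noteq> 0}"
  shows "linext g (\<lambda>v. r * c v) x = r * linext g c x"
proof -
  have "linext g (\<lambda>v. r * c v) x = (\<Sum>w\<in>{w. c w \<noteq> 0}. (r * c w) * g w x)"
    by (rule linext_sup) (use assms in auto)
  also have "\<dots> = r * linext g c x"
    by (simp add: linext_def sum_distrib_left mult.assoc)
  finally show ?thesis .
qed

lemma linext_zero: "linext g (\<lambda>v. 0) = (\<lambda>x. 0)"
  by (simp add: linext_def)

lemma boundaries_nonneg:
  "n \<ge> 0 \<Longrightarrow> boundaries n = linext bd_word ` chainsN (Suc (nat n))"
  unfolding boundaries_def chains_def bd_def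
  by (auto simp: nat_add_distrib intro!: image_cong)

lemma bnd_zero: "n \<ge> 0 \<Longrightarrow> (\<lambda>v. 0) \<in> boundaries n"
  by (auto simp: boundaries_nonneg image_iff linext_zero intro!: bexI[OF _ chainsN_zero])

lemma bnd_add:
  assumes n: "n \<ge> 0" and "c1 \<in> boundaries n" "c2 \<in> boundaries n"
  shows "(\<lambda>v. c1 v + c2 v) \<in> boundaries n"
proof -
  obtain e1 e2 where e: "e1 \<in> chainsN (Suc (nat n))" "e2 \<in> chainsN (Suc (nat n))"
     "c1 = linext bd_word e1" "c2 = linext bd_word e2"
    using assms by (auto simp: boundaries_nonneg)
  then have "(\<lambda>v. c1 v + c2 v) = linext bd_word (\<lambda>v. e1 v + e2 v)"
    by (auto simp: linext_add chainsN_fin)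
  then show ?thesis using e chainsN_add n by (auto simp: boundaries_nonneg)
qed

lemma bnd_scale:
  assumes n: "n \<ge> 0" and "c \<in> boundaries n"
  shows "(\<lambda>v. r * c v) \<in> boundaries n"
proof -
  obtain e where e: "e \<in> chainsN (Suc (nat n))" "c = linext bd_word e"
    using assms by (auto simp: boundaries_nonneg)
  then have "(\<lambda>v. r * c v) = linext bd_word (\<lambda>v. r * e v)"
    by (auto simp: linext_scale chainsN_fin)
  then show ?thesis using e chainsN_scale n by (auto simp: boundaries_nonneg)
qed

lemma bnd_diff:
  assumes n: "n \<ge> 0" and "c1 \<in> boundaries n" "c2 \<in> boundaries n"
  shows "(\<lambda>v. c1 v - c2 v) \<in> boundaries n"
  using bnd_add[OF n assms(2) bnd_scale[OF n assms(3), of "-1"]] by simp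

lemma bnd_sum:
  assumes n: "n \<ge> 0"
  shows "finite J \<Longrightarrow> (\<forall>j\<in>J. C j \<in> boundaries n) \<Longrightarrow> (\<lambda>v. \<Sum>j\<in>J. C j v) \<in> boundaries n"
proof (induction J rule: finite_induct)
  case empty then show ?case by (simp add: bnd_zero n)
next
  case (insert x F) then show ?case using bnd_add[OF n, of "C x" "\<lambda>v. \<Sum>j\<in>F. C j v"] by simp
qed

lemma bnd_word:
  assumes n: "n \<ge> 0" and l: "length w = Suc (Suc (nat n))"
  shows "linext bd_word (bas w) \<in> boundaries n"
  using bas_chainsN[OF l] by (auto simp: boundaries_nonneg n)

lemma linext_bas:
  "linext g (bas w) = (if nrm w then g w else (\<lambda>x. 0))"
proof
  fix x
  have "linext g (bas w) x = (\<Sum>v\<in>{w}. bas w v * g v x)"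
    by (rule linext_sup) (auto simp: bas_alt split: if_splits)
  then show "linext g (bas w) x = (if nrm w then g w else (\<lambda>x. 0)) x"
    by (simp add: bas_alt)
qed

lemma hclass_eq:
  assumes n: "n \<ge> 0" and d: "(\<lambda>v. c1 v - c2 v) \<in> boundaries n"
  shows "hclass n c1 = hclass n c2"
proof -
  have "(\<lambda>v. c' v - c1 v) \<in> boundaries n \<longleftrightarrow> (\<lambda>v. c' v - c2 v) \<in> boundaries n" for c'
  proof
    assume "(\<lambda>v. c' v - c1 v) \<in> boundaries n"
    from bnd_add[OF n this d] show "(\<lambda>v. c' v - c2 v) \<in> boundaries n" by simp
  next
    assume "(\<lambda>v. c' v - c2 v) \<in> boundaries n"
    from bnd_diff[OF n this d] show "(\<lambda>v. c' v - c1 v) \<in> boundaries n" by simp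
  qed
  then show ?thesis by (simp add: hclass_def)
qed

lemma hclass_inj:
  assumes n: "n \<ge> 0" and c1: "c1 \<in> chains n" and e: "hclass n c1 = hclass n c2"
  shows "(\<lambda>v. c1 v - c2 v) \<in> boundaries n"
proof -
  have "c1 \<in> hclass n c1" using c1 bnd_zero[OF n] by (simp add: hclass_def)
  then have "c1 \<in> hclass n c2" using e by simp
  then show ?thesis by (simp add: hclass_def)
qed

definition mrg :: "nat \<Rightarrow> int list \<Rightarrow> int list" where
  "mrg j as = take (j - 1) as @ [as ! (j - 1) + as ! j] @ drop (j + 1) as"

definition cobdF :: "nat \<Rightarrow> (int list \<Rightarrow> int \<Rightarrow> 'r::comm_ring_1) \<Rightarrow> int list \<Rightarrow> int \<Rightarrow> 'r" where
  "cobdF q f as = (\<lambda>i. lshift (hd as) (f (tl as)) i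
         + (\<Sum>j = 1..q. (-1) ^ j * f (mrg j as) i)
         + (-1) ^ Suc q * lshift (last as) (f (butlast as)) i)"

lemma cobd_eq: "cobd q f as = (if length as = Suc q \<and> (\<forall>a\<in>set as. a \<noteq> 0) then cobdF q f as else (\<lambda>i. 0))"
  unfolding cobd_def cobdF_def mrg_def by (rule refl)

lemma cochainsD: "f \<in> cochains q \<Longrightarrow> f as \<noteq> (\<lambda>i. 0) \<Longrightarrow> length as = q \<and> (\<forall>a\<in>set as. a \<noteq> 0)"
  by (simp add: cochains_def)

lemma cochainsD0: "f \<in> cochains q \<Longrightarrow> a \<in> set as \<Longrightarrow> a = 0 \<Longrightarrow> f as i = 0"
proof (rule ccontr)
  assume "f \<in> cochains q" "a \<in> set as" "a = 0" "f as i \<noteq> 0"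
  then show False using cochainsD[of f q as] by (metis)
qed

lemma cochainsDl: "f \<in> cochains q \<Longrightarrow> length as \<noteq> q \<Longrightarrow> f as i = 0"
proof (rule ccontr)
  assume "f \<in> cochains q" "length as \<noteq> q" "f as i \<noteq> 0"
  then show False using cochainsD[of f q as] by (metis)
qed

lemma cochains_lps: "f \<in> cochains q \<Longrightarrow> f as \<in> lps"
  by (simp add: cochains_def)

lemma cobd_diff: "cobd q (\<lambda>as i. g1 as i - g2 as i) = (\<lambda>as i. cobd q g1 as i - cobd q g2 as i)"
  by (auto simp: cobd_def lshift_def sum_subtractf algebra_simps intro!: ext)

lemma cochains_diff: "g1 \<in> cochains q \<Longrightarrow> g2 \<in> cochains q \<Longrightarrow> (\<lambda>as i. g1 as i - g2 as i) \<in> cochains q"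
  unfolding cochains_def
  by (auto simp: lps_diff) (metis (no_types) cancel_comm_monoid_add_class.diff_cancel)+

lemma cobd_add: "cobd q (\<lambda>as i. g1 as i + g2 as i) = (\<lambda>as i. cobd q g1 as i + cobd q g2 as i)"
  by (auto simp: cobd_def lshift_def sum.distrib algebra_simps intro!: ext)

lemma cochains_add: "g1 \<in> cochains q \<Longrightarrow> g2 \<in> cochains q \<Longrightarrow> (\<lambda>as i. g1 as i + g2 as i) \<in> cochains q"
  unfolding cochains_def
  by (auto simp: lps_add) (metis (no_types) add.right_neutral)+

lemma cochains_zero: "(\<lambda>as i. 0) \<in> cochains q"
  by (simp add: cochains_def)

lemma coclass_eq:
  assumes q: "q \<ge> 1" and d: "(\<lambda>as i. f1 as i - f2 as i) \<in> coboundaries q"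
  shows "coclass q f1 = coclass q f2"
proof -
  obtain h where h: "h \<in> cochains (q - 1)" "(\<lambda>as i. f1 as i - f2 as i) = cobd (q - 1) h"
    using d q by (auto simp: coboundaries_def)
  have "(\<lambda>as i. g as i - f1 as i) \<in> coboundaries q \<longleftrightarrow> (\<lambda>as i. g as i - f2 as i) \<in> coboundaries q" for g
  proof
    assume "(\<lambda>as i. g as i - f1 as i) \<in> coboundaries q"
    then obtain k where k: "k \<in> cochains (q - 1)" "(\<lambda>as i. g as i - f1 as i) = cobd (q - 1) k"
      using q by (auto simp: coboundaries_def)
    let ?k = "\<lambda>as i. k as i + h as i"
    have "cobd (q - 1) ?k = (\<lambda>as i. cobd (q - 1) k as i + cobd (q - 1) h as i)"
      by (rule cobd_add)
    then have "cobd (q - 1) ?k = (\<lambda>as i. g as i - f2 as i)"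
      using k(2)[symmetric] h(2)[symmetric] by (auto simp: fun_eq_iff dest: fun_cong)
    moreover have "?k \<in> cochains (q - 1)"
      by (intro cochains_add k h)
    ultimately show "(\<lambda>as i. g as i - f2 as i) \<in> coboundaries q"
      using q unfolding coboundaries_def by (metis (no_types, lifting) image_eqI not_one_le_zero)
  next
    assume "(\<lambda>as i. g as i - f2 as i) \<in> coboundaries q"
    then obtain k where k: "k \<in> cochains (q - 1)" "(\<lambda>as i. g as i - f2 as i) = cobd (q - 1) k"
      using q by (auto simp: coboundaries_def)
    let ?k = "\<lambda>as i. k as i - h as i"
    have "cobd (q - 1) ?k = (\<lambda>as i. cobd (q - 1) k as i - cobd (q - 1) h as i)"
      by (rule cobd_diff)
    then have "cobd (q - 1) ?k = (\<lambda>as i. g as i - f1 as i)"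
      using k(2)[symmetric] h(2)[symmetric] by (auto simp: fun_eq_iff dest: fun_cong)
    moreover have "?k \<in> cochains (q - 1)"
      by (intro cochains_diff k h)
    ultimately show "(\<lambda>as i. g as i - f1 as i) \<in> coboundaries q"
      using q unfolding coboundaries_def by (metis (no_types, lifting) image_eqI not_one_le_zero)
  qed
  then show ?thesis by (simp add: coclass_def)
qed

definition rngI :: "int \<Rightarrow> int set" where
  "rngI x = (if 0 \<le> x then {0..<x} else {x..<0})"

definition sgI :: "int \<Rightarrow> 'r::comm_ring_1" where
  "sgI x = (if 0 \<le> x then 1 else -1)"

definition Hf :: "(int list \<Rightarrow> int \<Rightarrow> 'r::comm_ring_1) \<Rightarrow> int list \<Rightarrow> int \<Rightarrow> int \<Rightarrow> 'r" where
  "Hf f c x = (\<lambda>i. \<Sum>j\<in>rngI x. sgI x * f (c @ [j, 1]) (i - (x - j - 1)))"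

lemma Hf_zero: "Hf f c 0 i = 0"
  by (simp add: Hf_def rngI_def)

lemma Hf_rec: "Hf f c (x + 1) i = Hf f c x (i - 1) + f (c @ [x, 1]) i"
proof (cases "0 \<le> x")
  case True
  have e: "{0..<x + 1} = insert x {0..<x}" using True by auto
  have "Hf f c (x + 1) i = (\<Sum>j\<in>insert x {0..<x}. f (c @ [j, 1]) (i - (x + 1 - j - 1)))"
    using True by (simp add: Hf_def rngI_def sgI_def e)
  also have "\<dots> = f (c @ [x, 1]) i + (\<Sum>j\<in>{0..<x}. f (c @ [j, 1]) (i - 1 - (x - j - 1)))"
    by (simp add: algebra_simps)
  also have "\<dots> = Hf f c x (i - 1) + f (c @ [x, 1]) i"
    using True by (simp add: Hf_def rngI_def sgI_def)
  finally show ?thesis .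
next
  case False
  have e: "{x..<0} = insert x {x + 1..<0}" using False by auto
  have e2: "rngI (x + 1) = {x + 1..<0}" using False by (auto simp: rngI_def)
  have "Hf f c (x + 1) i = - (\<Sum>j\<in>{x + 1..<0}. f (c @ [j, 1]) (i - (x - j)))"
    using False by (auto simp: Hf_def e2 sgI_def sum_negf)
  moreover have "Hf f c x (i - 1) = - f (c @ [x, 1]) i - (\<Sum>j\<in>{x + 1..<0}. f (c @ [j, 1]) (i - (x - j)))"
    using False by (simp add: Hf_def rngI_def sgI_def e sum_negf algebra_simps)
  ultimately show ?thesis by simp
qed

lemma Hf_lps: "(\<forall>as. f as \<in> lps) \<Longrightarrow> Hf f c x \<in> lps"
  unfolding Hf_def
  by (rule lps_sum) (auto simp: rngI_def intro!: lps_scshift)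

lemma mrg_app: "1 \<le> j \<Longrightarrow> j < length b \<Longrightarrow> mrg j (b @ ys) = mrg j b @ ys"
  by (auto simp: mrg_def nth_append)

lemma mrg_last1: "b \<noteq> [] \<Longrightarrow> mrg (length b) (b @ x # ys) = butlast b @ (last b + x) # ys"
  by (simp add: mrg_def nth_append butlast_conv_take last_conv_nth)

lemma mrg_last2: "mrg (Suc (length b)) (b @ [x, y]) = b @ [x + y]"
  by (simp add: mrg_def nth_append)

lemma length_mrg: "1 \<le> j \<Longrightarrow> j < length as \<Longrightarrow> length (mrg j as) = length as - 1"
  by (simp add: mrg_def)

context
  fixes f :: "int list \<Rightarrow> int \<Rightarrow> 'r::comm_ring_1" and m :: nat and b :: "int list"
  assumes fco: "f \<in> cochains (Suc (Suc m))"
    and fcy: "cobd (Suc (Suc m)) f = (\<lambda>as i. 0)"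
    and lb: "length b = Suc m" and bnz: "\<forall>a\<in>set b. a \<noteq> 0"
begin

definition DD :: "int \<Rightarrow> int \<Rightarrow> 'r" where
  "DD x i = lshift (hd b) (Hf f (tl b) x) i + (\<Sum>j = 1..m. (-1) ^ j * Hf f (mrg j b) x i)
     + (-1) ^ Suc m * Hf f (butlast b) (last b + x) i + (-1) ^ m * lshift x (Hf f (butlast b) (last b)) i"

definition EE :: "int \<Rightarrow> int \<Rightarrow> 'r" where
  "EE x i = lshift (hd b) (f (tl b @ [x, 1])) i + (\<Sum>j = 1..m. (-1) ^ j * f (mrg j b @ [x, 1]) i)
     + (-1) ^ Suc m * f (butlast b @ [last b + x, 1]) i"

lemma bne: "b \<noteq> []" using lb by auto

lemma EE_id: "EE x i = (-1) ^ Suc m * f (b @ [x + 1]) i + (-1) ^ m * f (b @ [x]) (i - 1)"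
proof (cases "x = 0")
  case False
  let ?as = "b @ [x, 1]"
  have g: "length ?as = Suc (Suc (Suc m)) \<and> (\<forall>a\<in>set ?as. a \<noteq> 0)" using lb bnz False by auto
  have "cobd (Suc (Suc m)) f ?as i = 0" using fcy by simp
  then have z: "cobdF (Suc (Suc m)) f ?as i = 0" using g by (simp add: cobd_eq)
  have s1: "(\<Sum>j = 1..Suc (Suc m). (-1) ^ j * f (mrg j ?as) i)
      = (\<Sum>j = 1..m. (-1) ^ j * f (mrg j b @ [x, 1]) i)
        + (-1) ^ Suc m * f (butlast b @ [last b + x, 1]) i + (-1) ^ Suc (Suc m) * f (b @ [x + 1]) i"
  proof -
    have "(\<Sum>j = 1..m. (-1) ^ j * f (mrg j ?as) i) = (\<Sum>j = 1..m. (-1) ^ j * f (mrg j b @ [x, 1]) i)"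
      by (rule sum.cong) (auto simp: mrg_app lb)
    moreover have "mrg (Suc m) ?as = butlast b @ [last b + x, 1]"
      using mrg_last1[OF bne, of x "[1]"] lb by simp
    moreover have "mrg (Suc (Suc m)) ?as = b @ [x + 1]"
      using mrg_last2[of b x 1] lb by simp
    ultimately show ?thesis by simp
  qed
  have "hd ?as = hd b" "tl ?as = tl b @ [x, 1]" "last ?as = 1" "butlast ?as = b @ [x]"
    using bne by (auto simp: butlast_append)
  then have "cobdF (Suc (Suc m)) f ?as i = EE x i + (-1) ^ m * f (b @ [x + 1]) i
      - (-1) ^ m * f (b @ [x]) (i - 1)"
    unfolding cobdF_def EE_def s1 by (simp add: lshift_def algebra_simps)
  with z show ?thesis by (simp add: algebra_simps)
next
  case True
  have a: "f (tl b @ [0, 1]) (i - hd b) = 0" by (rule cochainsD0[OF fco, of 0]) auto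
  have c: "f (mrg j b @ [0, 1]) i = 0" for j by (rule cochainsD0[OF fco, of 0]) auto
  have d: "f (b @ [0]) (i - 1) = 0" by (rule cochainsD0[OF fco, of 0]) auto
  have e: "butlast b @ [last b, 1] = b @ [1]" using bne by simp
  show ?thesis using True by (simp add: EE_def lshift_def a c d e)
qed

lemma DD_rec: "DD (x + 1) i = DD x (i - 1) + EE x i"
proof -
  have "(\<Sum>j = 1..m. (-1) ^ j * Hf f (mrg j b) (x + 1) i)
      = (\<Sum>j = 1..m. (-1) ^ j * Hf f (mrg j b) x (i - 1)) + (\<Sum>j = 1..m. (-1) ^ j * f (mrg j b @ [x, 1]) i)"
    by (simp add: Hf_rec sum.distrib distrib_left)
  moreover have "Hf f (butlast b) (last b + (x + 1)) i = Hf f (butlast b) (last b + x) (i - 1) + f (butlast b @ [last b + x, 1]) i"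
    using Hf_rec[of f "butlast b" "last b + x" i] by (simp add: add.assoc)
  moreover have "Hf f (tl b) (x + 1) (i - hd b) = Hf f (tl b) x (i - hd b - 1) + f (tl b @ [x, 1]) (i - hd b)"
    by (rule Hf_rec)
  ultimately show ?thesis
    by (simp add: DD_def EE_def lshift_def algebra_simps)
qed

lemma DD_val: "DD x i = (-1) ^ Suc m * f (b @ [x]) i"
proof (induction x arbitrary: i rule: int_induct[where k = 0])
  case base
  have "f (b @ [0]) i = 0" by (rule cochainsD0[OF fco, of 0]) auto
  then show ?case by (simp add: DD_def Hf_zero lshift_def)
next
  case (step1 x)
  show ?case using step1.IH[of "i - 1"] DD_rec[of x i] EE_id[of x i] by (simp add: algebra_simps)
next
  case (step2 x)
  have "DD (x - 1 + 1) (i + 1) = DD (x - 1) (i + 1 - 1) + EE (x - 1) (i + 1)"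
    by (rule DD_rec)
  then have "DD (x - 1) i = DD x (i + 1) - EE (x - 1) (i + 1)"
    by simp
  also have "DD x (i + 1) = (-1) ^ Suc m * f (b @ [x]) (i + 1)" by (rule step2.IH)
  also have "EE (x - 1) (i + 1) = (-1) ^ Suc m * f (b @ [x]) (i + 1) + (-1) ^ m * f (b @ [x - 1]) i"
    using EE_id[of "x - 1" "i + 1"] by simp
  finally show ?case by (simp add: algebra_simps)
qed

end

definition hh :: "(int list \<Rightarrow> int \<Rightarrow> 'r::comm_ring_1) \<Rightarrow> nat \<Rightarrow> int list \<Rightarrow> int \<Rightarrow> 'r" where
  "hh f m as = (if length as = Suc m then (\<lambda>i. (-1) ^ Suc m * Hf f (butlast as) (last as) i) else (\<lambda>i. 0))"

lemma hh_cochain: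
  assumes fco: "f \<in> cochains (Suc (Suc m))"
  shows "hh f m \<in> cochains (Suc m)"
  unfolding cochains_def
proof (intro CollectI conjI allI impI)
  fix as
  have "(\<lambda>i. (-1) ^ Suc m * Hf f (butlast as) (last as) i) \<in> lps"
    by (rule lps_scale[OF Hf_lps]) (use cochains_lps[OF fco] in auto)
  then show "hh f m as \<in> lps" by (simp add: hh_def)
  assume nz: "hh f m as \<noteq> (\<lambda>i. 0)"
  then show "length as = Suc m" by (auto simp: hh_def split: if_splits)
  show "\<forall>a\<in>set as. a \<noteq> 0"
  proof (rule ccontr)
    assume "\<not> (\<forall>a\<in>set as. a \<noteq> 0)"
    then have z: "0 \<in> set as" by auto
    have ne: "as \<noteq> []" using \<open>length as = Suc m\<close> by auto
    have "Hf f (butlast as) (last as) = (\<lambda>i. 0)"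
    proof (cases "last as = 0")
      case True then show ?thesis by (auto simp: Hf_def rngI_def)
    next
      case False
      have e: "set as = set (butlast as) \<union> {last as}"
        using ne by (metis append_butlast_last_id set_append empty_set list.simps(15))
      then have "0 \<in> set (butlast as)" using z False by auto
      show ?thesis unfolding Hf_def
      proof (rule ext, rule sum.neutral, rule ballI)
        fix i j
        have "f (butlast as @ [j, 1]) (i - (last as - j - 1)) = 0"
          using cochainsD0[OF fco, of 0 "butlast as @ [j, 1]"] \<open>0 \<in> set (butlast as)\<close> by simp
        then show "sgI (last as) * f (butlast as @ [j, 1]) (i - (last as - j - 1)) = 0" by simp
      qed
    qed
    then show False using nz by (auto simp: hh_def)
  qed
qed

lemma cobd_zero: "cobd q (\<lambda>as i. 0) = (\<lambda>as i. 0)"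
  by (auto simp: cobd_def lshift_def intro!: ext)

lemma ring_aux:
  fixes s :: "'r::comm_ring_1"
  assumes "t = u"
  shows "s * a + ((\<Sum>j\<in>J. c j * (s * h j)) + s * (s * e)) + t * (s * d)
     = s * (a + (\<Sum>j\<in>J. c j * h j) + s * e + u * d)"
  using assms by (simp add: algebra_simps sum_distrib_left)

lemma hh_cobd:
  assumes fco: "f \<in> cochains (Suc (Suc m))"
    and fcy: "cobd (Suc (Suc m)) f = (\<lambda>as i. 0)"
  shows "cobd (Suc m) (hh f m) = f"
proof (intro ext)
  fix as i
  show "cobd (Suc m) (hh f m) as i = f as i"
  proof (cases "length as = Suc (Suc m) \<and> (\<forall>a\<in>set as. a \<noteq> 0)")
    case False
    then show ?thesis using cochainsD0[OF fco] cochainsDl[OF fco]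
      by (auto simp: cobd_eq)
  next
    case True
    define b where "b = butlast as"
    define x where "x = last as"
    have ne: "as \<noteq> []" using True by auto
    have asb: "as = b @ [x]" using ne by (simp add: b_def x_def)
    have lb: "length b = Suc m" using True by (simp add: b_def)
    have bnz: "\<forall>a\<in>set b. a \<noteq> 0" using True by (simp add: b_def in_set_butlastD)
    have bne: "b \<noteq> []" using lb by auto
    have t1: "hh f m (tl as) = (\<lambda>i. (-1) ^ Suc m * Hf f (tl b) x i)"
      using lb bne by (simp add: asb hh_def)
    have t2: "hh f m (mrg j as) = (\<lambda>i. (-1) ^ Suc m * Hf f (mrg j b) x i)" if "1 \<le> j" "j \<le> m" for j
    proof -
      have "mrg j as = mrg j b @ [x]" using that lb by (simp add: asb mrg_app)
      moreover have "length (mrg j b) = m" using that lb by (simp add: length_mrg)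
      ultimately show ?thesis by (simp add: hh_def)
    qed
    have t3: "hh f m (mrg (Suc m) as) = (\<lambda>i. (-1) ^ Suc m * Hf f (butlast b) (last b + x) i)"
    proof -
      have "mrg (Suc m) as = butlast b @ [last b + x]"
        using mrg_last1[OF bne, of x "[]"] lb by (simp add: asb)
      then show ?thesis using lb by (simp add: hh_def)
    qed
    have t4: "hh f m (butlast as) = (\<lambda>i. (-1) ^ Suc m * Hf f (butlast b) (last b) i)"
      using lb by (simp add: asb hh_def)
    have hd: "hd as = hd b" and la: "last as = x" using bne by (auto simp: asb)
    have sm: "(\<Sum>j = 1..Suc m. (-1) ^ j * hh f m (mrg j as) i)
        = (\<Sum>j = 1..m. (-1) ^ j * ((-1) ^ Suc m * Hf f (mrg j b) x i))
          + (-1) ^ Suc m * ((-1) ^ Suc m * Hf f (butlast b) (last b + x) i)"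
      by (simp add: t2 t3)
    have "cobd (Suc m) (hh f m) as i = lshift (hd b) (\<lambda>i. (-1) ^ Suc m * Hf f (tl b) x i) i
       + ((\<Sum>j = 1..m. (-1) ^ j * ((-1) ^ Suc m * Hf f (mrg j b) x i))
          + (-1) ^ Suc m * ((-1) ^ Suc m * Hf f (butlast b) (last b + x) i))
       + (-1) ^ Suc (Suc m) * lshift x (\<lambda>i. (-1) ^ Suc m * Hf f (butlast b) (last b) i) i"
    proof -
      have c: "cobd (Suc m) (hh f m) as = cobdF (Suc m) (hh f m) as" using True by (simp add: cobd_eq)
      show ?thesis unfolding c cobdF_def sm t1 t4 hd la by (simp only: refl)
    qed
    also have "\<dots> = (-1) ^ Suc m * DD f m b x i"
      unfolding DD_def[OF fco fcy lb bnz] lshift_def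
      by (rule ring_aux) simp
    also have "\<dots> = (-1) ^ Suc m * ((-1) ^ Suc m * f (b @ [x]) i)"
      using DD_val[OF fco fcy lb bnz] by simp
    also have "\<dots> = f as i" by (simp add: asb)
    finally show ?thesis .
  qed
qed

lemma cocycle_ge2_triv:
  assumes q: "q \<ge> 2" and that: "f \<in> cocycles q"
  shows "coclass q f = coclass q (\<lambda>as i. 0 :: 'r::comm_ring_1)"
proof (rule coclass_eq)
  define m where "m = q - 2"
  have qm: "q = Suc (Suc m)" using q by (simp add: m_def)
  show "1 \<le> q" using q by simp
  have fco: "f \<in> cochains (Suc (Suc m))" and fcy: "cobd (Suc (Suc m)) f = (\<lambda>as i. 0)"
    using that by (auto simp: cocycles_def qm)
  have "f = cobd (Suc m) (hh f m)" using hh_cobd[OF fco fcy] by simp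
  then show "(\<lambda>as i. f as i - 0) \<in> coboundaries q"
    using hh_cochain[OF fco] by (auto simp: coboundaries_def qm)
qed

lemma HHco_ge2:
  assumes q: "q \<ge> 2"
  shows "HHco q = {coclass q (\<lambda>as i. 0 :: 'r::comm_ring_1)}"
proof -
  have z: "(\<lambda>as i. 0 :: 'r) \<in> cocycles q" by (simp add: cocycles_def cochains_zero cobd_zero)
  show ?thesis unfolding HHco_def
  proof (rule set_eqI)
    fix X :: "(int list \<Rightarrow> int \<Rightarrow> 'r) set"
    show "X \<in> coclass q ` cocycles q \<longleftrightarrow> X \<in> {coclass q (\<lambda>as i. 0)}"
    proof
      assume "X \<in> coclass q ` cocycles q"
      then obtain f where f: "f \<in> cocycles q" "X = coclass q f" by blast
      show "X \<in> {coclass q (\<lambda>as i. 0)}" using cocycle_ge2_triv[OF q f(1)] f(2) by simp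
    next
      assume "X \<in> {coclass q (\<lambda>as i. 0)}"
      then show "X \<in> coclass q ` cocycles q" using z by simp
    qed
  qed
qed

lemma bdw1: "bd_word [a] = (\<lambda>v. 0)"
  by (simp add: bd_word_def)

lemma bdw2: "bd_word [a, c] = (\<lambda>v. 0 :: 'r::comm_ring_1)"
  by (simp add: bd_word_def face_def add.commute)

lemma bdw3: "bd_word [x, y, a] = (\<lambda>v. bas [y, a + x] v - bas [x + y, a] v + (bas [x, y + a] v :: 'r::comm_ring_1))"
  by (simp add: bd_word_def face_def)

lemma sum4: "(\<Sum>i::nat = 0..3. g i) = g 0 + g 1 + g 2 + (g 3 :: 'a::comm_monoid_add)"
  by (simp add: eval_nat_numeral add.assoc)

lemma bdw4: "bd_word [x, y, z, a] = (\<lambda>v. bas [y, z, a + x] v - bas [x + y, z, a] v + bas [x, y + z, a] v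
     - (bas [x, y, z + a] v :: 'r::comm_ring_1))"
  by (rule ext) (simp add: bd_word_def face_def sum4 numeral_3_eq_3)

lemma nrm3: "nrm [x, y, a] \<longleftrightarrow> x \<noteq> 0 \<and> y \<noteq> 0"
  by (auto simp: nrm_def less_Suc_eq numeral_2_eq_2)

lemma nrm4: "nrm [x, y, z, a] \<longleftrightarrow> x \<noteq> 0 \<and> y \<noteq> 0 \<and> z \<noteq> 0"
  by (auto simp: nrm_def less_Suc_eq numeral_3_eq_3)

lemma nrm2: "nrm [x, a] \<longleftrightarrow> x \<noteq> 0"
  by (auto simp: nrm_def)

lemma nrm1: "nrm [a]"
  by (auto simp: nrm_def)

lemma bas_zero_iff: "\<not> nrm w \<Longrightarrow> bas w v = 0"
  by (simp add: bas_alt)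

lemma bdw3_nn: "\<not> nrm [x, y, a] \<Longrightarrow> bd_word [x, y, a] = (\<lambda>v. 0 :: 'r::comm_ring_1)"
  by (auto simp: bdw3 nrm3 nrm2 bas_alt)

lemma bdw4_nn: "\<not> nrm [x, y, z, a] \<Longrightarrow> bd_word [x, y, z, a] = (\<lambda>v. 0 :: 'r::comm_ring_1)"
  by (auto simp: bdw4 nrm4 nrm3 bas_alt)

lemma lin_bd3: "linext bd_word (bas [x, y, a]) = (bd_word [x, y, a] :: int list \<Rightarrow> 'r::comm_ring_1)"
  by (auto simp: linext_bas bdw3_nn)

lemma lin_bd4: "linext bd_word (bas [x, y, z, a]) = (bd_word [x, y, z, a] :: int list \<Rightarrow> 'r::comm_ring_1)"
  by (auto simp: linext_bas bdw4_nn)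

lemma Bw1: "connesB_word [m] = (\<lambda>v. bas [m, 0] v)"
  by (simp add: connesB_word_def)

lemma Bw2: "connesB_word [a, c] = (\<lambda>v. bas [c, a, 0] v - (bas [a, c, 0] v :: 'r::comm_ring_1))"
  by (simp add: connesB_word_def rotate1_def)

lemma rng_rec:
  "(\<Sum>j\<in>rngI (y + 1). sgI (y + 1) * F j (y + 1 - j)) = (\<Sum>j\<in>rngI y. sgI y * F j (y - j + 1)) + (F y 1 :: 'r::comm_ring_1)"
proof (cases "0 \<le> y")
  case True
  have e: "{0..<y + 1} = insert y {0..<y}" using True by auto
  have "(\<Sum>j\<in>rngI (y + 1). sgI (y + 1) * F j (y + 1 - j)) = (\<Sum>j\<in>insert y {0..<y}. F j (y + 1 - j))"
    using True by (simp add: rngI_def sgI_def e)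
  also have "\<dots> = F y 1 + (\<Sum>j\<in>{0..<y}. F j (y - j + 1))"
    by (simp add: algebra_simps)
  finally show ?thesis using True by (simp add: rngI_def sgI_def)
next
  case False
  have e: "{y..<0} = insert y {y + 1..<0}" using False by auto
  have e2: "rngI (y + 1) = {y + 1..<0}" using False by (auto simp: rngI_def)
  have "(\<Sum>j\<in>rngI (y + 1). sgI (y + 1) * F j (y + 1 - j)) = - (\<Sum>j\<in>{y + 1..<0}. F j (y - j + 1))"
  proof (cases "y = -1")
    case True then show ?thesis by (simp add: rngI_def)
  next
    case False
    then have "y + 1 < 0" using \<open>\<not> 0 \<le> y\<close> by simp
    then show ?thesis unfolding e2 sgI_def by (simp add: sum_negf algebra_simps)
  qed
  moreover have "(\<Sum>j\<in>rngI y. sgI y * F j (y - j + 1)) = - F y 1 - (\<Sum>j\<in>{y + 1..<0}. F j (y - j + 1))"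
    using False by (simp add: rngI_def sgI_def e sum_negf)
  ultimately show ?thesis by simp
qed

definition sW :: "int \<Rightarrow> int \<Rightarrow> int \<Rightarrow> int list \<Rightarrow> 'r::comm_ring_1" where
  "sW x y a0 v = (\<Sum>j\<in>rngI y. sgI y * bas [x, j, 1, a0 + (y - j) - 1] v)"

definition BSv :: "int \<Rightarrow> int \<Rightarrow> int \<Rightarrow> int list \<Rightarrow> 'r::comm_ring_1" where
  "BSv x y a0 v = (\<Sum>j\<in>rngI y. sgI y * bd_word [x, j, 1, a0 + (y - j) - 1] v)"

definition sP :: "int \<Rightarrow> int \<Rightarrow> int list \<Rightarrow> 'r::comm_ring_1" where
  "sP z a0 v = - (\<Sum>j\<in>rngI z. sgI z * bas [j, 1, a0 + (z - j) - 1] v)"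

definition SPb :: "int \<Rightarrow> int \<Rightarrow> int \<Rightarrow> int list \<Rightarrow> 'r::comm_ring_1" where
  "SPb x y a0 v = sP y (a0 + x) v - sP (x + y) a0 v + sP x (y + a0) v"

lemma sW_rec: "sW x (y + 1) a0 v = sW x y (a0 + 1) v + (bas [x, y, 1, a0] v :: 'r::comm_ring_1)"
proof -
  have "sW x (y + 1) a0 v = (\<Sum>j\<in>rngI y. sgI y * bas [x, j, 1, a0 + (y - j + 1) - 1] v) + (bas [x, y, 1, a0 + 1 - 1] v :: 'r)"
    unfolding sW_def by (rule rng_rec[where F = "\<lambda>j d. bas [x, j, 1, a0 + d - 1] v"])
  then show ?thesis by (simp add: sW_def algebra_simps)
qed

lemma BSv_rec: "BSv x (y + 1) a0 v = BSv x y (a0 + 1) v + (bd_word [x, y, 1, a0] v :: 'r::comm_ring_1)"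
proof -
  have "BSv x (y + 1) a0 v = (\<Sum>j\<in>rngI y. sgI y * bd_word [x, j, 1, a0 + (y - j + 1) - 1] v) + (bd_word [x, y, 1, a0 + 1 - 1] v :: 'r)"
    unfolding BSv_def by (rule rng_rec[where F = "\<lambda>j d. bd_word [x, j, 1, a0 + d - 1] v"])
  then show ?thesis by (simp add: BSv_def algebra_simps)
qed

lemma sP_rec: "sP (z + 1) a0 v = sP z (a0 + 1) v - (bas [z, 1, a0] v :: 'r::comm_ring_1)"
proof -
  have "(\<Sum>j\<in>rngI (z + 1). sgI (z + 1) * bas [j, 1, a0 + (z + 1 - j) - 1] v) = (\<Sum>j\<in>rngI z. sgI z * bas [j, 1, a0 + (z - j + 1) - 1] v) + (bas [z, 1, a0 + 1 - 1] v :: 'r)"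
    by (rule rng_rec[where F = "\<lambda>j d. bas [j, 1, a0 + d - 1] v"])
  then show ?thesis by (simp add: sP_def algebra_simps)
qed

lemma rngI0: "rngI 0 = {}" by (simp add: rngI_def)

lemma L_rec:
  "BSv x (y + 1) a0 v + SPb x (y + 1) a0 v =
   BSv x y (a0 + 1) v + SPb x y (a0 + 1) v + bas [x, y + 1, a0] v - (bas [x, y, a0 + 1] v :: 'r::comm_ring_1)"
proof -
  have a: "sP (y + 1) (a0 + x) v = sP y (a0 + 1 + x) v - (bas [y, 1, a0 + x] v :: 'r)"
    using sP_rec[of y "a0 + x" v] by (simp add: algebra_simps)
  have b: "sP (x + (y + 1)) a0 v = sP (x + y) (a0 + 1) v - (bas [x + y, 1, a0] v :: 'r)"
    using sP_rec[of "x + y" a0 v] by (simp add: algebra_simps)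
  have c: "sP x (y + 1 + a0) v = (sP x (y + (a0 + 1)) v :: 'r)"
    by (simp add: algebra_simps)
  have d: "bd_word [x, y, 1, a0] v = bas [y, 1, a0 + x] v - bas [x + y, 1, a0] v + bas [x, y + 1, a0] v
     - (bas [x, y, 1 + a0] v :: 'r)"
    by (simp add: bdw4)
  show ?thesis
    unfolding BSv_rec SPb_def a b c d by (simp add: algebra_simps)
qed

lemma L_val: "BSv x y a0 v + SPb x y a0 v = (bas [x, y, a0] v :: 'r::comm_ring_1)"
proof (induction y arbitrary: a0 rule: int_induct[where k = 0])
  case base
  show ?case by (simp add: BSv_def SPb_def sP_def rngI0 bas_alt nrm3)
next
  case (step1 y)
  show ?case unfolding L_rec[of x y a0 v] step1.IH[of "a0 + 1"] by simp
next
  case (step2 y)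
  have "BSv x (y - 1) a0 v + SPb x (y - 1) a0 v = (BSv x y (a0 - 1) v + SPb x y (a0 - 1) v) - bas [x, y, a0 - 1] v + (bas [x, y - 1, a0] v :: 'r)"
    using L_rec[of x "y - 1" "a0 - 1" v, where 'r='r] by (simp add: algebra_simps)
  then show ?case using step2.IH[of "a0 - 1"] by simp
qed

lemma sW_chain: "(\<lambda>v. sW x y a0 v) \<in> chainsN 3"
  unfolding sW_def
  by (rule chainsN_sum) (auto simp: rngI_def intro!: chainsN_scale bas_chainsN)

lemma bd_sW: "linext bd_word (\<lambda>v. sW x y a0 v) = (\<lambda>v. BSv x y a0 v :: 'r::comm_ring_1)"
proof
  fix u
  have "linext bd_word (\<lambda>v. sW x y a0 v) u =
      (\<Sum>j\<in>rngI y. sgI y * (if nrm [x, j, 1, a0 + (y - j) - 1] then bd_word [x, j, 1, a0 + (y - j) - 1] u else 0))"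
    unfolding sW_def by (rule linext_fsum) (simp add: rngI_def)
  also have "\<dots> = BSv x y a0 u"
    unfolding BSv_def by (rule sum.cong) (auto simp: bdw4_nn)
  finally show "linext bd_word (\<lambda>v. sW x y a0 v) u = BSv x y a0 u" .
qed

lemma bnd2: "boundaries 2 = linext bd_word ` chainsN 3"
  by (simp add: boundaries_nonneg numeral_3_eq_3)

lemma bnd1: "boundaries 1 = linext bd_word ` chainsN 2"
  by (simp add: boundaries_nonneg numeral_2_eq_2)

lemma bnd0: "boundaries 0 = linext bd_word ` chainsN 1"
  by (simp add: boundaries_nonneg)

lemma BSv_bnd: "(\<lambda>v. BSv x y a0 v) \<in> (boundaries 2 :: (int list \<Rightarrow> 'r::comm_ring_1) set)"
  unfolding bnd2 using bd_sW[of x y a0] sW_chain[of x y a0]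
  by (metis image_eqI)

lemma Bw2_bnd: "connesB_word [a, c] \<in> (boundaries 2 :: (int list \<Rightarrow> 'r::comm_ring_1) set)"
proof -
  have "connesB_word [a, c] = (\<lambda>v. BSv c a 0 v - (BSv a c 0 v :: 'r))"
  proof
    fix v
    have sp: "SPb c a 0 v = (SPb a c 0 v :: 'r)" by (simp add: SPb_def add.commute)
    have "connesB_word [a, c] v = bas [c, a, 0] v - (bas [a, c, 0] v :: 'r)" by (simp add: Bw2)
    also have "\<dots> = (BSv c a 0 v + SPb c a 0 v) - (BSv a c 0 v + SPb a c 0 v)"
      unfolding L_val ..
    also have "\<dots> = BSv c a 0 v - (BSv a c 0 v :: 'r)" unfolding sp by simp
    finally show "connesB_word [a, c] v = BSv c a 0 v - (BSv a c 0 v :: 'r)" .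
  qed
  then show ?thesis using bnd_diff[OF _ BSv_bnd BSv_bnd] by simp
qed

lemma B1_bnd:
  assumes "x \<in> chains 1"
  shows "connesB 1 x \<in> (boundaries 2 :: (int list \<Rightarrow> 'r::comm_ring_1) set)"
proof -
  have x: "x \<in> chainsN 1" using assms by (simp add: chains_def)
  have "connesB 1 x = (\<lambda>v. \<Sum>w\<in>{w. x w \<noteq> 0}. x w * connesB_word w v)"
    by (simp add: connesB_def linext_def)
  moreover have "(\<lambda>v. \<Sum>w\<in>{w. x w \<noteq> 0}. x w * connesB_word w v) \<in> (boundaries 2 :: (int list \<Rightarrow> 'r) set)"
  proof (rule bnd_sum)
    show "finite {w. x w \<noteq> 0}" using x by (simp add: chainsN_def)
    show "\<forall>w\<in>{w. x w \<noteq> 0}. (\<lambda>v. x w * connesB_word w v) \<in> boundaries 2"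
    proof
      fix w assume "w \<in> {w. x w \<noteq> 0}"
      then have "length w = 2" using x by (auto simp: chainsN_def)
      then have "w = [w ! 0, w ! 1]"
        by (metis One_nat_def Suc_1 length_0_conv length_Suc_conv nth_Cons_0 nth_Cons_Suc)
      then have "connesB_word w \<in> (boundaries 2 :: (int list \<Rightarrow> 'r) set)" using Bw2_bnd by metis
      then show "(\<lambda>v. x w * connesB_word w v) \<in> boundaries 2" by (rule bnd_scale[rotated]) simp
    qed
  qed simp
  ultimately show ?thesis by simp
qed

lemma R1: "(\<lambda>v. bas [x, a0] v - of_int x * bas [1, x + a0 - 1] v) \<in> (boundaries 1 :: (int list \<Rightarrow> 'r::comm_ring_1) set)"
proof (induction x arbitrary: a0 rule: int_induct[where k = 0])
  case base
  have "(\<lambda>v. bas [0, a0] v - of_int 0 * bas [1, 0 + a0 - 1] v) = (\<lambda>v. 0 :: 'r)"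
    by (simp add: bas_alt nrm2)
  then show ?case using bnd_zero[of 1] by simp
next
  case (step1 x)
  have bw: "bd_word [x, 1, a0] \<in> (boundaries 1 :: (int list \<Rightarrow> 'r) set)"
    using bnd_word[of 1 "[x, 1, a0]"] unfolding lin_bd3 by simp
  have "(\<lambda>v. bas [x + 1, a0] v - of_int (x + 1) * bas [1, x + 1 + a0 - 1] v) =
     (\<lambda>v. (bas [x, a0 + 1] v - of_int x * bas [1, x + (a0 + 1) - 1] v) - (bd_word [x, 1, a0] v :: 'r))"
    by (rule ext) (simp add: bdw3 algebra_simps)
  then show ?case using bnd_diff[OF _ step1.IH[of "a0 + 1"] bw] by simp
next
  case (step2 x)
  have bw: "bd_word [x - 1, 1, a0 - 1] \<in> (boundaries 1 :: (int list \<Rightarrow> 'r) set)"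
    using bnd_word[of 1 "[x - 1, 1, a0 - 1]"] unfolding lin_bd3 by simp
  have "(\<lambda>v. bas [x - 1, a0] v - of_int (x - 1) * bas [1, x - 1 + a0 - 1] v) =
     (\<lambda>v. (bas [x, a0 - 1] v - of_int x * bas [1, x + (a0 - 1) - 1] v) + (bd_word [x - 1, 1, a0 - 1] v :: 'r))"
    by (rule ext) (simp add: bdw3 algebra_simps)
  then show ?case using bnd_add[OF _ step2.IH[of "a0 - 1"] bw] by simp
qed

lemma bd_chainsN1: "e \<in> chainsN 1 \<Longrightarrow> linext bd_word e = (\<lambda>v. 0 :: 'r::comm_ring_1)"
proof
  fix v assume e: "e \<in> chainsN 1"
  have bw: "bd_word w v = 0" if "e w \<noteq> 0" for w
  proof -
    have "length w = 2" using e that by (auto simp: chainsN_def)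
    then have "w = [w ! 0, w ! 1]"
      by (metis One_nat_def Suc_1 length_0_conv length_Suc_conv nth_Cons_0 nth_Cons_Suc)
    then show ?thesis by (metis bdw2)
  qed
  show "linext bd_word e v = 0" unfolding linext_def by (rule sum.neutral) (simp add: bw)
qed

lemma bnd0_zero: "boundaries 0 = {\<lambda>v. 0 :: 'r::comm_ring_1}"
  using bd_chainsN1 chainsN_zero[of 1] by (auto simp: bnd0)

lemma hclass0: "c \<in> chains 0 \<Longrightarrow> hclass 0 c = {c}"
  by (auto simp: hclass_def bnd0_zero fun_eq_iff)

lemma cycles1: "cycles 1 = (chains 1 :: (int list \<Rightarrow> 'r::comm_ring_1) set)"
  using bd_chainsN1 by (auto simp: cycles_def bd_def chains_def)

lemma cycles0: "cycles 0 = chains 0"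
  by (auto simp: cycles_def bd_def)

lemma HHho0: "HHho 0 = (\<lambda>c. {c}) ` (chains 0 :: (int list \<Rightarrow> 'r::comm_ring_1) set)"
  by (auto simp: HHho_def cycles0 hclass0)

lemma HHho_neg:
  assumes "n < 0"
  shows "HHho n = {{\<lambda>v. 0 :: 'r::comm_ring_1}}"
proof -
  have ch: "chains n = {\<lambda>v. 0 :: 'r}" using assms by (simp add: chains_def)
  have b: "boundaries n = {\<lambda>v. 0 :: 'r}"
  proof -
    have "bd (n + 1) = (\<lambda>c v. 0 :: 'r)" using assms by (auto simp: bd_def)
    moreover have "chains (n + 1) \<noteq> ({} :: (int list \<Rightarrow> 'r) set)"
      using chainsN_zero by (auto simp: chains_def)
    ultimately show ?thesis by (auto simp: boundaries_def)
  qed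
  have cy: "cycles n = {\<lambda>v. 0 :: 'r}" using assms ch by (auto simp: cycles_def bd_def)
  show ?thesis by (auto simp: HHho_def cy hclass_def ch b)
qed

definition der :: "(int \<Rightarrow> 'r::comm_ring_1) \<Rightarrow> int list \<Rightarrow> int \<Rightarrow> 'r" where
  "der p = (\<lambda>as. if length as = 1 \<and> hd as \<noteq> 0 then (\<lambda>i. - of_int (hd as) * p (i - (hd as - 1))) else (\<lambda>i. 0))"

lemma cobd0_zero: "cobd 0 g = (\<lambda>as i. 0)"
proof (intro ext)
  fix as :: "int list" and i
  show "cobd 0 g as i = 0"
  proof (cases "length as = 1")
    case True
    then obtain a where "as = [a]" by (metis One_nat_def length_0_conv length_Suc_conv)
    then show ?thesis by (simp add: cobd_def lshift_def)
  next
    case False then show ?thesis by (simp add: cobd_def)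
  qed
qed

lemma cob0: "coboundaries 0 = {\<lambda>as i. 0}"
  by (simp add: coboundaries_def)

lemma cob1: "coboundaries 1 = {\<lambda>as i. 0}"
proof -
  have "cochains 0 \<noteq> {}" using cochains_zero by blast
  then show ?thesis by (auto simp: coboundaries_def cobd0_zero)
qed

lemma coclass01: "q \<le> 1 \<Longrightarrow> f \<in> cochains q \<Longrightarrow> coclass q f = {f}"
proof -
  assume q: "q \<le> 1" and f: "f \<in> cochains q"
  have c: "coboundaries q = {\<lambda>as i. 0}" using q cob0 cob1 by (cases q) auto
  show ?thesis using f by (auto simp: coclass_def c fun_eq_iff)
qed

lemma cochain0_in: "p \<in> lps \<Longrightarrow> cochain0 p \<in> cochains 0"
  by (auto simp: cochains_def cochain0_def)

lemma cochains0_eq: "f \<in> cochains 0 \<Longrightarrow> f = cochain0 (f [])"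
  using cochainsDl[of f 0] by (auto simp: cochain0_def fun_eq_iff)

lemma cocycles0: "cocycles 0 = cochains 0"
  by (simp add: cocycles_def cobd0_zero)

lemma HHco0: "HHco 0 = (\<lambda>p. {cochain0 p}) ` (lps :: (int \<Rightarrow> 'r::comm_ring_1) set)"
proof -
  have "HHco 0 = (\<lambda>f. {f}) ` (cochains 0 :: (int list \<Rightarrow> int \<Rightarrow> 'r) set)"
    by (auto simp: HHco_def cocycles0 coclass01)
  also have "(cochains 0 :: (int list \<Rightarrow> int \<Rightarrow> 'r) set) = cochain0 ` lps"
  proof
    show "cochains 0 \<subseteq> cochain0 ` (lps :: (int \<Rightarrow> 'r) set)"
    proof
      fix f :: "int list \<Rightarrow> int \<Rightarrow> 'r" assume "f \<in> cochains 0"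
      then show "f \<in> cochain0 ` lps"
        using cochains0_eq[of f] cochains_lps[of f 0] by (metis image_eqI)
    qed
  qed (auto intro: cochain0_in)
  finally show ?thesis by auto
qed

lemma der_in: "p \<in> lps \<Longrightarrow> der p \<in> cochains 1"
  unfolding cochains_def
proof (intro CollectI conjI allI impI)
  fix as assume p: "p \<in> lps"
  show "der p as \<in> lps"
    using lps_scshift[OF p, of "- of_int (hd as)" "hd as - 1"] by (simp add: der_def)
next
  fix as assume "der p as \<noteq> (\<lambda>i. 0)"
  then show "length as = 1" by (auto simp: der_def split: if_splits)
next
  fix as assume "der p as \<noteq> (\<lambda>i. 0)"
  then have l: "length as = 1 \<and> hd as \<noteq> 0" by (auto simp: der_def split: if_splits)
  then obtain a where "as = [a]" by (metis One_nat_def length_0_conv length_Suc_conv)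
  then show "\<forall>a\<in>set as. a \<noteq> 0" using l by simp
qed

lemma der_cocycle: "p \<in> lps \<Longrightarrow> der p \<in> cocycles 1"
proof -
  assume p: "p \<in> lps"
  have "cobd 1 (der p) as i = 0" for as i
  proof (cases "length as = 2 \<and> (\<forall>a\<in>set as. a \<noteq> 0)")
    case True
    then obtain a b where ab: "as = [a, b]" "a \<noteq> 0" "b \<noteq> 0"
      by (metis (no_types) One_nat_def Suc_1 length_0_conv length_Suc_conv list.set_intros(1) list.set_intros(2))
    have m: "mrg (Suc 0) [a, b] = [a + b]" by (simp add: mrg_def)
    have "cobd 1 (der p) as i = der p [b] (i - a) - der p [a + b] i + der p [a] (i - b)"
      using True by (simp add: cobd_eq cobdF_def ab m lshift_def)
    also have "\<dots> = 0"
    proof (cases "a + b = 0")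
      case True
      then have "b = - a" by simp
      then show ?thesis using ab by (simp add: der_def algebra_simps)
    next
      case False
      then show ?thesis using ab by (simp add: der_def algebra_simps)
    qed
    finally show ?thesis .
  next
    case False
    then show ?thesis by (auto simp: cobd_eq)
  qed
  then show ?thesis using der_in[OF p] by (auto simp: cocycles_def fun_eq_iff)
qed

lemma cocycle1_der:
  assumes f: "f \<in> cocycles 1"
  shows "f = der (\<lambda>i. - f [1] i)"
proof -
  have fco: "f \<in> cochains 1" and fcy: "cobd 1 f = (\<lambda>as i. 0)" using f by (auto simp: cocycles_def)
  have f0: "f [0] i = 0" for i by (rule cochainsD0[OF fco, of 0]) auto
  have rel: "f [j + 1] i = f [j] (i - 1) + f [1] (i - j)" for j i
  proof (cases "j = 0")
    case True then show ?thesis by (simp add: f0)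
  next
    case False
    have m: "mrg (Suc 0) [1, j] = [1 + j]" by (simp add: mrg_def)
    have "cobd 1 f [1, j] i = 0" using fcy by simp
    then have "f [j] (i - 1) - f [1 + j] i + f [1] (i - j) = 0"
      using False by (simp add: cobd_eq cobdF_def m lshift_def)
    then show ?thesis by (simp add: algebra_simps)
  qed
  have val: "f [j] i = of_int j * f [1] (i - (j - 1))" for j i
  proof (induction j arbitrary: i rule: int_induct[where k = 0])
    case base then show ?case by (simp add: f0)
  next
    case (step1 j)
    show ?case using rel[of j i] step1.IH[of "i - 1"] by (simp add: algebra_simps)
  next
    case (step2 j)
    have "f [j - 1] i = f [j - 1 + 1] (i + 1) - f [1] (i + 1 - (j - 1))"
      using rel[of "j - 1" "i + 1"] by simp
    then show ?case using step2.IH[of "i + 1"] by (simp add: algebra_simps)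
  qed
  show ?thesis
  proof (intro ext)
    fix as i
    show "f as i = der (\<lambda>i. - f [1] i) as i"
    proof (cases "length as = 1")
      case True
      then obtain j where j: "as = [j]" by (metis One_nat_def length_0_conv length_Suc_conv)
      show ?thesis using val[of j i] by (cases "j = 0") (simp_all add: j der_def f0)
    next
      case False
      then show ?thesis using cochainsDl[OF fco] by (simp add: der_def)
    qed
  qed
qed

lemma cocycles1: "cocycles 1 = der ` (lps :: (int \<Rightarrow> 'r::comm_ring_1) set)"
proof
  show "cocycles 1 \<subseteq> der ` (lps :: (int \<Rightarrow> 'r) set)"
  proof
    fix f :: "int list \<Rightarrow> int \<Rightarrow> 'r" assume f: "f \<in> cocycles 1"
    have "(\<lambda>i. - f [1] i) \<in> lps"
      using lps_scale[OF cochains_lps[of f 1 "[1]"], of "-1"] f by (simp add: cocycles_def)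
    then show "f \<in> der ` lps" using cocycle1_der[OF f] by (metis image_eqI)
  qed
next
  show "der ` (lps :: (int \<Rightarrow> 'r) set) \<subseteq> cocycles 1" using der_cocycle by blast
qed

lemma HHco1: "HHco 1 = (\<lambda>p. {der p}) ` (lps :: (int \<Rightarrow> 'r::comm_ring_1) set)"
proof -
  have "coclass 1 f = {f}" if "f \<in> cocycles 1" for f :: "int list \<Rightarrow> int \<Rightarrow> 'r"
    using that coclass01[of 1 f] by (simp add: cocycles_def)
  then have "HHco 1 = (\<lambda>f. {f}) ` (cocycles 1 :: (int list \<Rightarrow> int \<Rightarrow> 'r) set)"
    unfolding HHco_def by (rule image_cong[OF refl])
  also have "\<dots> = (\<lambda>f. {f}) ` der ` (lps :: (int \<Rightarrow> 'r) set)" by (simp only: cocycles1)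
  finally show ?thesis by (simp add: image_image)
qed

lemma der_inj: "der p = der p' \<Longrightarrow> p = p'"
proof
  fix i assume "der p = der p'"
  then have "der p [1] i = der p' [1] i" by simp
  then show "p i = p' i" by (simp add: der_def)
qed

lemma cochain0_inj: "cochain0 p = cochain0 p' \<Longrightarrow> p = p'"
  by (metis cochain0_def)

lemma delta_sum: "finite S \<Longrightarrow> (\<Sum>i\<in>S. g i * (if i = i0 then 1 else 0)) = (if i0 \<in> S then g i0 else (0::'r::comm_ring_1))"
proof -
  assume S: "finite S"
  have "(\<Sum>i\<in>S. g i * (if i = i0 then 1 else 0)) = (\<Sum>i\<in>S. if i0 = i then g i else 0)"
    by (rule sum.cong) auto
  then show ?thesis using S by (simp add: sum.delta)
qed

lemma a_rep_supp: "{w. a_rep u k w \<noteq> 0} \<subseteq> {[1, k]}"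
  by (auto simp: a_rep_def split: if_splits)

lemma cap_arep: "cap (a_rep u k) q f v = - u * cap_word q f [1, k] v"
proof -
  have "cap (a_rep u k) q f v = (\<Sum>w\<in>{[1, k]}. a_rep u k w * cap_word q f w v)"
    unfolding cap_def by (rule linext_sup) (auto simp: a_rep_supp)
  then show ?thesis by (simp add: a_rep_def)
qed

definition rho0 :: "'r::comm_ring_1 \<Rightarrow> int \<Rightarrow> (int \<Rightarrow> 'r) \<Rightarrow> int list \<Rightarrow> 'r" where
  "rho0 u k p = (\<lambda>v. \<Sum>i\<in>{i. p i \<noteq> 0}. (- u * p i) * bas [1, k + i] v)"

definition rho1 :: "'r::comm_ring_1 \<Rightarrow> int \<Rightarrow> (int \<Rightarrow> 'r) \<Rightarrow> int list \<Rightarrow> 'r" where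
  "rho1 u k p = (\<lambda>v. \<Sum>i\<in>{i. p i \<noteq> 0}. (- u * p i) * bas [k + i] v)"

lemma rho0_cap: "cap (a_rep u k) 0 (cochain0 p) = rho0 u k p"
proof
  fix v
  show "cap (a_rep u k) 0 (cochain0 p) v = rho0 u k p v"
    by (simp add: cap_arep cap_word_def cochain0_def rho0_def sum_distrib_left mult.assoc)
qed

lemma rho1_cap: "cap (a_rep u k) 1 (der p) = rho1 u k p"
proof
  fix v
  have e: "{i. - p i \<noteq> 0} = {i. p i \<noteq> 0}" by auto
  show "cap (a_rep u k) 1 (der p) v = rho1 u k p v"
    by (simp add: cap_arep cap_word_def der_def rho1_def e sum_distrib_left sum_negf mult.assoc)
qed

lemma rho1_val:
  assumes p: "p \<in> lps"
  shows "rho1 u k p v = (if length v = 1 then - u * p (hd v - k) else 0)"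
proof (cases "length v = 1")
  case True
  then obtain m where v: "v = [m]" by (metis One_nat_def length_0_conv length_Suc_conv)
  have "rho1 u k p v = (\<Sum>i\<in>{i. p i \<noteq> 0}. (- u * p i) * (if i = m - k then 1 else 0))"
    unfolding rho1_def by (rule sum.cong) (auto simp: bas_alt nrm1 v)
  also have "\<dots> = (if m - k \<in> {i. p i \<noteq> 0} then - u * p (m - k) else 0)"
    by (rule delta_sum) (use p in \<open>simp add: lps_def\<close>)
  also have "\<dots> = - u * p (m - k)" by auto
  finally show ?thesis by (simp add: v)
next
  case False
  then show ?thesis by (auto simp: rho1_def bas_alt intro!: sum.neutral)
qed

lemma rho0_val:
  assumes p: "p \<in> lps"
  shows "rho0 u k p v = (if length v = 2 \<and> hd v = 1 then - u * p (v ! 1 - k) else 0)"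
proof (cases "length v = 2 \<and> hd v = 1")
  case True
  then have v: "v = [1, v ! 1]"
    by (metis One_nat_def Suc_1 hd_conv_nth length_0_conv length_Suc_conv nth_Cons_0 nth_Cons_Suc)
  have "rho0 u k p v = (\<Sum>i\<in>{i. p i \<noteq> 0}. (- u * p i) * (if i = v ! 1 - k then 1 else 0))"
    unfolding rho0_def by (rule sum.cong) (auto simp: bas_alt nrm2, subst v, auto, subst (asm) v, auto)
  also have "\<dots> = (if v ! 1 - k \<in> {i. p i \<noteq> 0} then - u * p (v ! 1 - k) else 0)"
    by (rule delta_sum) (use p in \<open>simp add: lps_def\<close>)
  also have "\<dots> = - u * p (v ! 1 - k)" by auto
  finally show ?thesis using True by simp
next
  case False
  then show ?thesis by (auto simp: rho0_def bas_alt intro!: sum.neutral)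
qed

lemma rho0_chain: "p \<in> lps \<Longrightarrow> rho0 u k p \<in> chains 1"
  unfolding rho0_def chains_def
proof -
  assume p: "p \<in> lps"
  have "(\<lambda>v. \<Sum>i\<in>{i. p i \<noteq> 0}. (- u * p i) * bas [1, k + i] v) \<in> chainsN 1"
  proof (rule chainsN_sum)
    show "finite {i. p i \<noteq> 0}" using p by (simp add: lps_def)
    show "\<forall>j\<in>{i. p i \<noteq> 0}. (\<lambda>v. (- u * p j) * bas [1, k + j] v) \<in> chainsN 1"
      by (intro ballI chainsN_scale bas_chainsN) simp
  qed
  then show "(\<lambda>v. \<Sum>i\<in>{i. p i \<noteq> 0}. (- u * p i) * bas [1, k + i] v) \<in> (if (1::int) < 0 then {\<lambda>_. 0} else chainsN (nat 1))"
    by simp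
qed

lemma rho1_chain: "p \<in> lps \<Longrightarrow> rho1 u k p \<in> chains 0"
  unfolding rho1_def chains_def
proof -
  assume p: "p \<in> lps"
  have "(\<lambda>v. \<Sum>i\<in>{i. p i \<noteq> 0}. (- u * p i) * bas [k + i] v) \<in> chainsN 0"
  proof (rule chainsN_sum)
    show "finite {i. p i \<noteq> 0}" using p by (simp add: lps_def)
    show "\<forall>j\<in>{i. p i \<noteq> 0}. (\<lambda>v. (- u * p j) * bas [k + j] v) \<in> chainsN 0"
      by (intro ballI chainsN_scale bas_chainsN) simp
  qed
  then show "(\<lambda>v. \<Sum>i\<in>{i. p i \<noteq> 0}. (- u * p i) * bas [k + i] v) \<in> (if (0::int) < 0 then {\<lambda>_. 0} else chainsN (nat 0))"
    by simp
qed

lemma linext_comp: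
  assumes e: "finite {w. e w \<noteq> 0}" and h: "\<And>w. e w \<noteq> 0 \<Longrightarrow> finite {v. h w v \<noteq> 0}"
  shows "linext g (linext h e) x = linext (\<lambda>w. linext g (h w)) e x"
proof -
  let ?S = "{w. e w \<noteq> 0}"
  let ?T = "\<Union>w\<in>?S. {v. h w v \<noteq> 0}"
  have fT: "finite ?T" using e h by auto
  have sub: "{v. linext h e v \<noteq> 0} \<subseteq> ?T"
  proof
    fix v assume "v \<in> {v. linext h e v \<noteq> 0}"
    then obtain w where "w \<in> ?S" "e w * h w v \<noteq> 0" unfolding linext_def
      by (metis (mono_tags, lifting) mem_Collect_eq sum.neutral)
    then show "v \<in> ?T" by auto
  qed
  have "linext g (linext h e) x = (\<Sum>v\<in>?T. linext h e v * g v x)"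
    by (rule linext_sup[OF fT sub])
  also have "\<dots> = (\<Sum>v\<in>?T. \<Sum>w\<in>?S. e w * h w v * g v x)"
    by (simp add: linext_def sum_distrib_right)
  also have "\<dots> = (\<Sum>w\<in>?S. e w * (\<Sum>v\<in>?T. h w v * g v x))"
    by (subst sum.swap) (simp add: sum_distrib_left mult.assoc)
  also have "\<dots> = (\<Sum>w\<in>?S. e w * linext g (h w) x)"
  proof (rule sum.cong[OF refl])
    fix w assume w: "w \<in> ?S"
    have "linext g (h w) x = (\<Sum>v\<in>?T. h w v * g v x)"
      by (rule linext_sup[OF fT]) (use w in auto)
    then show "e w * (\<Sum>v\<in>?T. h w v * g v x) = e w * linext g (h w) x" by simp
  qed
  also have "\<dots> = linext (\<lambda>w. linext g (h w)) e x" by (simp add: linext_def)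
  finally show ?thesis .
qed

definition phW :: "int \<Rightarrow> int list \<Rightarrow> int list \<Rightarrow> 'r::comm_ring_1" where
  "phW m w v = (if w ! 0 + w ! 1 - 1 = m then of_int (w ! 0) else 0)"

lemma sum3: "(\<Sum>j\<in>{0..<3::nat}. F j) = F 0 + F (Suc 0) + (F (Suc (Suc 0)) :: 'a::comm_monoid_add)"
  by (simp add: eval_nat_numeral sum.atLeast0_lessThan_Suc)

lemma bdw3_fs: "bd_word [x, y, a] = (\<lambda>v. \<Sum>j\<in>{0..<3::nat}. ([1, -1, 1] ! j) *
     bas ([[y, a + x], [x + y, a], [x, y + a]] ! j) v :: 'r::comm_ring_1)"
  by (simp add: bdw3 sum3)

lemma phW2: "(if nrm [p, q] then phW m [p, q] [] else 0) = (if p + q - 1 = m then of_int p else (0::'r::comm_ring_1))"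
  by (cases "p = 0") (auto simp: nrm2 phW_def)

lemma phi_bdw3: "linext (phW m) (bd_word [x, y, a]) [] = (0 :: 'r::comm_ring_1)"
proof -
  have "linext (phW m) (bd_word [x, y, a]) [] = (\<Sum>j\<in>{0..<3::nat}. ([1, -1, 1] ! j) *
     (if nrm ([[y, a + x], [x + y, a], [x, y + a]] ! j)
      then phW m ([[y, a + x], [x + y, a], [x, y + a]] ! j) [] else (0::'r)))"
    unfolding bdw3_fs by (rule linext_fsum) simp
  also have "\<dots> = (if y + (a + x) - 1 = m then of_int y else 0) - (if x + y + a - 1 = m then of_int (x + y) else 0)
      + (if x + (y + a) - 1 = m then of_int x else (0::'r))"
    unfolding sum3 by (simp only: nth_Cons_0 nth_Cons_Suc phW2) simp
  also have "\<dots> = 0"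
  proof -
    have e1: "y + (a + x) - 1 = x + y + a - 1" "x + (y + a) - 1 = x + y + a - 1" by simp_all
    show ?thesis unfolding e1 by (cases "x + y + a - 1 = m") simp_all
  qed
  finally show ?thesis .
qed

lemma phi1_bnd:
  assumes e: "e \<in> chainsN 2"
  shows "linext (phW m) (linext bd_word e) [] = (0 :: 'r::comm_ring_1)"
proof -
  have fe: "finite {w. e w \<noteq> 0}" using e by (simp add: chainsN_def)
  have len: "e w \<noteq> 0 \<Longrightarrow> w = [w ! 0, w ! 1, w ! 2]" for w
  proof -
    assume "e w \<noteq> 0"
    then have "length w = Suc (Suc (Suc 0))" using e by (auto simp: chainsN_def)
    then obtain a b c where "w = [a, b, c]" by (auto simp: length_Suc_conv)
    then show ?thesis by simp
  qed
  have fin: "finite {v. bd_word w v \<noteq> (0::'r)}" if ew: "e w \<noteq> 0" for w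
  proof -
    obtain a b c where w: "w = [a, b, c]" using len[OF ew] by blast
    have "{v. bd_word w v \<noteq> (0::'r)} \<subseteq> {[b, c + a], [a + b, c], [a, b + c]}"
    proof
      fix v assume "v \<in> {v. bd_word w v \<noteq> (0::'r)}"
      then have "bas [b, c + a] v - bas [a + b, c] v + bas [a, b + c] v \<noteq> (0::'r)"
        by (simp add: w bdw3)
      then show "v \<in> {[b, c + a], [a + b, c], [a, b + c]}"
        by (auto simp: bas_alt split: if_splits)
    qed
    then show ?thesis by (rule finite_subset) simp
  qed
  have "linext (phW m) (linext bd_word e) [] = linext (\<lambda>w. linext (phW m) (bd_word w)) e []"
    by (rule linext_comp[OF fe fin])
  also have "\<dots> = (\<Sum>w\<in>{w. e w \<noteq> 0}. e w * linext (phW m) (bd_word w) [])"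
    by (simp only: linext_def[of "\<lambda>w. linext (phW m) (bd_word w)" e])
  also have "\<dots> = 0"
  proof (rule sum.neutral, rule ballI)
    fix w assume "w \<in> {w. e w \<noteq> 0}"
    then have "w = [w ! 0, w ! 1, w ! 2]" using len by auto
    then have "linext (phW m) (bd_word w) [] = (0::'r)" by (metis phi_bdw3)
    then show "e w * linext (phW m) (bd_word w) [] = 0" by simp
  qed
  finally show ?thesis .
qed

lemma linext_diff:
  assumes "finite {w. c1 w \<noteq> 0}" "finite {w. c2 w \<noteq> 0}"
  shows "linext g (\<lambda>v. c1 v - c2 v) x = linext g c1 x - linext g c2 x"
proof -
  have f2: "finite {w. (-1) * c2 w \<noteq> 0}" using assms(2) by simp
  have "linext g (\<lambda>v. c1 v + (-1) * c2 v) x = linext g c1 x + linext g (\<lambda>v. (-1) * c2 v) x"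
    by (rule linext_add[OF assms(1) f2])
  also have "linext g (\<lambda>v. (-1) * c2 v) x = (-1) * linext g c2 x"
    by (rule linext_scale[OF assms(2)])
  finally show ?thesis by simp
qed

lemma phi1_rho0:
  assumes p: "p \<in> lps"
  shows "linext (phW m) (rho0 u k p) [] = - u * p (m - k)"
proof -
  have fS: "finite {i. p i \<noteq> 0}" using p by (simp add: lps_def)
  have "linext (phW m) (rho0 u k p) [] = (\<Sum>i\<in>{i. p i \<noteq> 0}. (- u * p i) *
      (if nrm [1, k + i] then phW m [1, k + i] [] else 0))"
    unfolding rho0_def by (rule linext_fsum[OF fS])
  also have "\<dots> = (\<Sum>i\<in>{i. p i \<noteq> 0}. (- u * p i) * (if i = m - k then 1 else 0))"
    by (rule sum.cong) (auto simp: nrm2 phW_def)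
  also have "\<dots> = (if m - k \<in> {i. p i \<noteq> 0} then - u * p (m - k) else 0)"
    by (rule delta_sum[OF fS])
  also have "\<dots> = - u * p (m - k)" by auto
  finally show ?thesis .
qed

lemma unit_cancel:
  assumes u: "u dvd (1::'r::comm_ring_1)" and e: "- u * a = - u * b"
  shows "a = b"
proof -
  obtain vv where vv: "1 = u * vv" using u by (auto simp: dvd_def)
  have "a = (- vv) * (- u * a)" using vv by (simp add: algebra_simps)
  also have "\<dots> = (- vv) * (- u * b)" using e by simp
  also have "\<dots> = b" using vv by (simp add: algebra_simps)
  finally show ?thesis .
qed

lemma chains1_fin: "c \<in> chains 1 \<Longrightarrow> finite {w. c w \<noteq> 0}"
  by (simp add: chains_def chainsN_def)

lemma rho0_inj:
  assumes u: "u dvd 1" and p: "p \<in> lps" and p': "p' \<in> lps"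
    and e: "hclass 1 (rho0 u k p) = hclass 1 (rho0 u k p')"
  shows "p = p'"
proof
  fix i
  have d: "(\<lambda>v. rho0 u k p v - rho0 u k p' v) \<in> boundaries 1"
    by (rule hclass_inj[OF _ rho0_chain[OF p] e]) simp
  then obtain ee where ee: "ee \<in> chainsN 2" "(\<lambda>v. rho0 u k p v - rho0 u k p' v) = linext bd_word ee"
    by (auto simp: bnd1)
  have "0 = linext (phW (i + k)) (\<lambda>v. rho0 u k p v - rho0 u k p' v) []"
    using phi1_bnd[OF ee(1)] ee(2) by simp
  also have "\<dots> = linext (phW (i + k)) (rho0 u k p) [] - linext (phW (i + k)) (rho0 u k p') []"
    by (rule linext_diff) (auto intro: chains1_fin rho0_chain p p')
  finally have "- u * p i = - u * p' i" using phi1_rho0[OF p] phi1_rho0[OF p'] by simp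
  then show "p i = p' i" by (rule unit_cancel[OF u])
qed

lemma two_list: "length w = 2 \<Longrightarrow> w = [w ! 0, w ! 1]"
proof -
  assume "length w = 2"
  then have "length w = Suc (Suc 0)" by simp
  then obtain a b where "w = [a, b]" by (auto simp: length_Suc_conv)
  then show ?thesis by simp
qed

lemma rho0_surj:
  fixes u :: "'r::comm_ring_1"
  assumes u: "u dvd 1" and c: "c \<in> chains 1"
  shows "\<exists>p\<in>lps. hclass 1 c = hclass 1 (rho0 u k p)"
proof -
  obtain vv where vv: "1 = u * vv" using u by (auto simp: dvd_def)
  have cN: "c \<in> chainsN 1" using c by (simp add: chains_def)
  let ?S = "{w. c w \<noteq> 0}"
  have fS: "finite ?S" using cN by (simp add: chainsN_def)
  have wf: "w = [w ! 0, w ! 1]" if "w \<in> ?S" for w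
    using that cN by (intro two_list) (auto simp: chainsN_def)
  define N where "N = (\<lambda>v. \<Sum>w\<in>?S. c w * (of_int (w ! 0) * bas [1, w ! 0 + w ! 1 - 1] v))"
  have dec: "c = (\<lambda>v. \<Sum>w\<in>?S. c w * bas w v)" by (rule chainsN_decomp[OF cN])
  have diff: "(\<lambda>v. c v - N v) = (\<lambda>v. \<Sum>w\<in>?S. c w * (bas [w ! 0, w ! 1] v - of_int (w ! 0) * bas [1, w ! 0 + w ! 1 - 1] v))"
  proof
    fix v
    have "c v - N v = (\<Sum>w\<in>?S. c w * bas w v) - N v" by (subst dec) simp
    also have "\<dots> = (\<Sum>w\<in>?S. c w * bas w v - c w * (of_int (w ! 0) * bas [1, w ! 0 + w ! 1 - 1] v))"
      by (simp add: N_def sum_subtractf)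
    also have "\<dots> = (\<Sum>w\<in>?S. c w * (bas [w ! 0, w ! 1] v - of_int (w ! 0) * bas [1, w ! 0 + w ! 1 - 1] v))"
    proof (rule sum.cong[OF refl])
      fix w assume w: "w \<in> ?S"
      have bw: "(bas w v :: 'r) = bas [w ! 0, w ! 1] v" by (rule arg_cong[where f = "\<lambda>x. bas x v", OF wf[OF w]])
      show "c w * bas w v - c w * (of_int (w ! 0) * bas [1, w ! 0 + w ! 1 - 1] v) =
          c w * (bas [w ! 0, w ! 1] v - of_int (w ! 0) * bas [1, w ! 0 + w ! 1 - 1] v)"
        unfolding bw by (simp add: right_diff_distrib)
    qed
    finally show "c v - N v = \<dots>" .
  qed
  have dB: "(\<lambda>v. c v - N v) \<in> boundaries 1"
    unfolding diff
  proof (rule bnd_sum[OF _ fS])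
    show "\<forall>w\<in>?S. (\<lambda>v. c w * (bas [w ! 0, w ! 1] v - of_int (w ! 0) * bas [1, w ! 0 + w ! 1 - 1] v)) \<in> boundaries 1"
      by (intro ballI) (rule bnd_scale[OF _ R1], simp)
  qed simp
  define p where "p = (\<lambda>i. - vv * (\<Sum>w\<in>?S. c w * (if w ! 0 + w ! 1 - 1 = k + i then of_int (w ! 0) else 0)))"
  have pl: "p \<in> lps"
  proof -
    have "{i. p i \<noteq> 0} \<subseteq> (\<lambda>w. w ! 0 + w ! 1 - 1 - k) ` ?S"
    proof
      fix i assume "i \<in> {i. p i \<noteq> 0}"
      then have "(\<Sum>w\<in>?S. c w * (if w ! 0 + w ! 1 - 1 = k + i then of_int (w ! 0) else 0)) \<noteq> 0"
        by (auto simp: p_def)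
      then obtain w where "w \<in> ?S" "c w * (if w ! 0 + w ! 1 - 1 = k + i then of_int (w ! 0) else 0) \<noteq> 0"
        by (meson sum.not_neutral_contains_not_neutral)
      then have "w \<in> ?S" "w ! 0 + w ! 1 - 1 = k + i" by (auto split: if_splits)
      then show "i \<in> (\<lambda>w. w ! 0 + w ! 1 - 1 - k) ` ?S" by (auto intro: rev_image_eqI)
    qed
    then show ?thesis using fS by (auto simp: lps_def intro: finite_subset)
  qed
  have NR: "N = rho0 u k p"
  proof
    fix v
    show "N v = rho0 u k p v"
    proof (cases "length v = 2 \<and> hd v = 1")
      case True
      then obtain a b where ab: "v = [a, b]" by (auto simp: length_Suc_conv numeral_2_eq_2)
      then have "a = 1" using True by simp
      then have v: "v = [1, v ! 1]" using ab by simp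
      have "N v = (\<Sum>w\<in>?S. c w * (if w ! 0 + w ! 1 - 1 = v ! 1 then of_int (w ! 0) else 0))"
        unfolding N_def
      proof (rule sum.cong[OF refl])
        fix w assume "w \<in> ?S"
        have eq: "(bas [1, w ! 0 + w ! 1 - 1] v :: 'r) = (if w ! 0 + w ! 1 - 1 = v ! 1 then 1 else 0)"
          by (subst v) (auto simp: bas_alt nrm2)
        show "c w * (of_int (w ! 0) * bas [1, w ! 0 + w ! 1 - 1] v) =
            c w * (if w ! 0 + w ! 1 - 1 = v ! 1 then of_int (w ! 0) else 0)"
          unfolding eq by (cases "w ! 0 + w ! 1 - 1 = v ! 1") simp_all
      qed
      also have "\<dots> = - u * p (v ! 1 - k)"
      proof -
        have e: "k + (v ! 1 - k) = v ! 1" by simp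
        have "- u * (- vv * X) = X" for X using vv by (metis minus_mult_minus mult.assoc mult_1)
        then show ?thesis unfolding p_def e by simp
      qed
      also have "\<dots> = rho0 u k p v" using rho0_val[OF pl] True by simp
      finally show ?thesis .
    next
      case False
      have "N v = 0" unfolding N_def
      proof (rule sum.neutral, intro ballI)
        fix w
        have "(bas [1, w ! 0 + w ! 1 - 1] v :: 'r) = 0" using False by (auto simp: bas_alt)
        then show "c w * (of_int (w ! 0) * bas [1, w ! 0 + w ! 1 - 1] v) = 0" by simp
      qed
      then show ?thesis using rho0_val[OF pl] False by auto
    qed
  qed
  have "hclass 1 c = hclass 1 N" by (rule hclass_eq[OF _ dB]) simp
  then show ?thesis using pl NR by auto
qed

lemma rho1_inj:
  assumes u: "u dvd 1" and p: "p \<in> lps" and p': "p' \<in> lps" and e: "rho1 u k p = rho1 u k p'"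
  shows "p = p'"
proof
  fix i
  have "rho1 u k p [i + k] = rho1 u k p' [i + k]" using e by simp
  then have "- u * p i = - u * p' i" using rho1_val[OF p] rho1_val[OF p'] by simp
  then show "p i = p' i" by (rule unit_cancel[OF u])
qed

lemma rho1_surj:
  assumes u: "u dvd 1" and c: "c \<in> chains 0"
  shows "\<exists>p\<in>lps. c = rho1 u k p"
proof -
  obtain vv where vv: "1 = u * vv" using u by (auto simp: dvd_def)
  have cN: "c \<in> chainsN 0" using c by (simp add: chains_def)
  define p where "p = (\<lambda>i. - vv * c [k + i])"
  have pl: "p \<in> lps"
  proof -
    have "{i. p i \<noteq> 0} \<subseteq> (\<lambda>w. hd w - k) ` {w. c w \<noteq> 0}"
    proof
      fix i assume "i \<in> {i. p i \<noteq> 0}"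
      then have "c [k + i] \<noteq> 0" by (auto simp: p_def)
      then show "i \<in> (\<lambda>w. hd w - k) ` {w. c w \<noteq> 0}" by (auto intro: rev_image_eqI)
    qed
    moreover have "finite {w. c w \<noteq> 0}" using cN by (simp add: chainsN_def)
    ultimately show ?thesis by (auto simp: lps_def intro: finite_subset)
  qed
  have "c = rho1 u k p"
  proof
    fix v
    show "c v = rho1 u k p v"
    proof (cases "length v = 1")
      case True
      then obtain m where v: "v = [m]" by (metis One_nat_def length_0_conv length_Suc_conv)
      have "u * (vv * c [m]) = c [m]" by (metis mult.assoc mult_1 vv)
      then show ?thesis using rho1_val[OF pl] by (simp add: v p_def)
    next
      case False
      then have "c v = 0" using cN by (auto simp: chainsN_def)
      then show ?thesis using rho1_val[OF pl] False by simp
    qed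
  qed
  then show ?thesis using pl by auto
qed

lemma some_single: "(SOME x. x \<in> {a}) = a" by simp

lemma rhoHH0: "rhoHH u k 0 {cochain0 p} = hclass 1 (rho0 u k p)"
  by (simp add: rhoHH_def induced_def rho0_cap)

lemma rhoHH1: "p \<in> lps \<Longrightarrow> rhoHH u k 1 {der p} = {rho1 u k p}"
  unfolding rhoHH_def induced_def some_single rho1_cap by (simp add: hclass0 rho1_chain)

lemma hclass_neg: "n < 0 \<Longrightarrow> hclass n c = (if c = (\<lambda>v. 0) then {\<lambda>v. 0 :: 'r::comm_ring_1} else {})"
proof -
  assume n: "n < 0"
  have ch: "chains n = {\<lambda>v. 0 :: 'r}" using n by (simp add: chains_def)
  have b: "boundaries n = {\<lambda>v. 0 :: 'r}"
  proof -
    have "bd (n + 1) = (\<lambda>c v. 0 :: 'r)" using n by (auto simp: bd_def)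
    moreover have "chains (n + 1) \<noteq> ({} :: (int list \<Rightarrow> 'r) set)"
      using chainsN_zero by (auto simp: chains_def)
    ultimately show ?thesis by (auto simp: boundaries_def)
  qed
  show ?thesis by (auto simp: hclass_def ch b fun_eq_iff)
qed

lemma cap_ge2: "q \<ge> 2 \<Longrightarrow> cap (a_rep u k) q f = (\<lambda>v. 0)"
  by (rule ext) (simp add: cap_arep cap_word_def)

lemma bij_rho:
  fixes u :: "'r::comm_ring_1"
  assumes u: "u dvd 1"
  shows "bij_betw (rhoHH u k q) (HHco q) (HHho (1 - int q))"
proof (cases "q \<ge> 2")
  case True
  have A: "HHco q = {coclass q (\<lambda>as i. 0 :: 'r)}" by (rule HHco_ge2[OF True])
  have B: "HHho (1 - int q) = {{\<lambda>v. 0 :: 'r}}" by (rule HHho_neg) (use True in simp)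
  have "rhoHH u k q (coclass q (\<lambda>as i. 0 :: 'r)) = {\<lambda>v. 0}"
    using True by (simp add: rhoHH_def induced_def cap_ge2 hclass_neg)
  then show ?thesis by (simp add: A B bij_betw_def)
next
  case False
  then consider "q = 0" | "q = 1" by linarith
  then show ?thesis
  proof cases
    case 1
    have inj: "inj_on (rhoHH u k 0) (HHco 0 :: (int list \<Rightarrow> int \<Rightarrow> 'r) set set)"
    proof (rule inj_onI)
      fix X Y :: "(int list \<Rightarrow> int \<Rightarrow> 'r) set"
      assume X: "X \<in> HHco 0" and Y: "Y \<in> HHco 0" and e: "rhoHH u k 0 X = rhoHH u k 0 Y"
      obtain p where p: "p \<in> lps" "X = {cochain0 p}" using X by (auto simp: HHco0)
      obtain p' where p': "p' \<in> lps" "Y = {cochain0 p'}" using Y by (auto simp: HHco0)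
      have "p = p'" using rho0_inj[OF u p(1) p'(1)] e by (simp add: p p' rhoHH0)
      then show "X = Y" using p p' by simp
    qed
    have img: "rhoHH u k 0 ` HHco 0 = (HHho 1 :: (int list \<Rightarrow> 'r) set set)"
    proof
      show "rhoHH u k 0 ` HHco 0 \<subseteq> HHho 1"
        by (auto simp: HHco0 rhoHH0 HHho_def cycles1 intro: rho0_chain)
      show "HHho 1 \<subseteq> rhoHH u k 0 ` HHco 0"
      proof
        fix Z assume "Z \<in> (HHho 1 :: (int list \<Rightarrow> 'r) set set)"
        then obtain c where c: "c \<in> chains 1" "Z = hclass 1 c" by (auto simp: HHho_def cycles1)
        obtain p where p: "p \<in> lps" "hclass 1 c = hclass 1 (rho0 u k p)" using rho0_surj[OF u c(1)] by blast
        have "Z = rhoHH u k 0 {cochain0 p}" using c p by (simp add: rhoHH0)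
        moreover have "{cochain0 p} \<in> HHco 0" using p by (auto simp: HHco0)
        ultimately show "Z \<in> rhoHH u k 0 ` HHco 0" by blast
      qed
    qed
    show ?thesis using inj img 1 by (simp add: bij_betw_def)
  next
    case 2
    have inj: "inj_on (rhoHH u k 1) (HHco 1 :: (int list \<Rightarrow> int \<Rightarrow> 'r) set set)"
    proof (rule inj_onI)
      fix X Y :: "(int list \<Rightarrow> int \<Rightarrow> 'r) set"
      assume X: "X \<in> HHco 1" and Y: "Y \<in> HHco 1" and e: "rhoHH u k 1 X = rhoHH u k 1 Y"
      obtain p where p: "p \<in> lps" "X = {der p}" using X unfolding HHco1 by auto
      obtain p' where p': "p' \<in> lps" "Y = {der p'}" using Y unfolding HHco1 by auto
      have "rho1 u k p = rho1 u k p'" using e unfolding p p' rhoHH1[OF p(1)] rhoHH1[OF p'(1)] by simp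
      then have "p = p'" using rho1_inj[OF u p(1) p'(1)] by simp
      then show "X = Y" using p p' by simp
    qed
    have img: "rhoHH u k 1 ` HHco 1 = (HHho 0 :: (int list \<Rightarrow> 'r) set set)"
    proof
      show "rhoHH u k 1 ` HHco 1 \<subseteq> HHho 0"
        unfolding HHco1 HHho0 using rhoHH1 rho1_chain by fastforce
      show "HHho 0 \<subseteq> rhoHH u k 1 ` HHco 1"
      proof
        fix Z assume "Z \<in> (HHho 0 :: (int list \<Rightarrow> 'r) set set)"
        then obtain c where c: "c \<in> chains 0" "Z = {c}" by (auto simp: HHho0)
        obtain p where p: "p \<in> lps" "c = rho1 u k p" using rho1_surj[OF u c(1)] by blast
        have "Z = rhoHH u k 1 {der p}" using c p unfolding rhoHH1[OF p(1)] by simp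
        moreover have "{der p} \<in> HHco 1" using p unfolding HHco1 by auto
        ultimately show "Z \<in> rhoHH u k 1 ` HHco 1" by blast
      qed
    qed
    show ?thesis using inj img 2 by (simp add: bij_betw_def)
  qed
qed

lemma Phi0_single: "p \<in> lps \<Longrightarrow> coclass 0 (cochain0 p) = {cochain0 p}"
  by (rule coclass01) (auto intro: cochain0_in)

lemma Phi1_single: "p \<in> lps \<Longrightarrow> coclass 1 (der p) = {der p}"
proof -
  assume p: "p \<in> lps"
  show ?thesis by (rule coclass01[OF _ der_in[OF p]]) simp
qed

lemma bij_Phi0: "bij_betw (\<lambda>p. coclass 0 (cochain0 p)) lps (HHco 0 :: (int list \<Rightarrow> int \<Rightarrow> 'r::comm_ring_1) set set)"
  unfolding bij_betw_def
proof
  show "inj_on (\<lambda>p. coclass 0 (cochain0 p)) (lps :: (int \<Rightarrow> 'r) set)"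
    by (rule inj_onI) (simp add: Phi0_single cochain0_inj)
  show "(\<lambda>p. coclass 0 (cochain0 p)) ` lps = (HHco 0 :: (int list \<Rightarrow> int \<Rightarrow> 'r) set set)"
    unfolding HHco0 by (auto simp: Phi0_single)
qed

lemma bij_Phi1: "bij_betw (\<lambda>p. coclass 1 (der p)) lps (HHco 1 :: (int list \<Rightarrow> int \<Rightarrow> 'r::comm_ring_1) set set)"
  unfolding bij_betw_def
proof
  show "inj_on (\<lambda>p. coclass 1 (der p)) (lps :: (int \<Rightarrow> 'r) set)"
  proof (rule inj_onI)
    fix p p' :: "int \<Rightarrow> 'r" assume "p \<in> lps" "p' \<in> lps" "coclass 1 (der p) = coclass 1 (der p')"
    then show "p = p'" unfolding Phi1_single[OF \<open>p \<in> lps\<close>] Phi1_single[OF \<open>p' \<in> lps\<close>] by (simp add: der_inj)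
  qed
  show "(\<lambda>p. coclass 1 (der p)) ` lps = (HHco 1 :: (int list \<Rightarrow> int \<Rightarrow> 'r) set set)"
    unfolding HHco1 using Phi1_single by (metis (no_types, lifting) image_cong)
qed

lemma cochain0_add: "cochain0 (\<lambda>i. p i + p' i) = (\<lambda>as i. cochain0 p as i + cochain0 p' as i)"
  by (auto simp: cochain0_def fun_eq_iff)

lemma der_add: "der (\<lambda>i. p i + p' i) = (\<lambda>as i. der p as i + der p' as i)"
  by (auto simp: der_def fun_eq_iff algebra_simps)

lemma cochain0_smult: "cochain0 (lsmult r p) = (\<lambda>as i. r * cochain0 p as i)"
  by (auto simp: cochain0_def lsmult_def fun_eq_iff)

lemma der_smult: "der (lsmult r p) = (\<lambda>as i. r * der p as i)"
  by (auto simp: der_def lsmult_def fun_eq_iff algebra_simps)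

lemma lmul_zero_right: "lmul p (\<lambda>i. 0) = (\<lambda>i. 0)"
  by (simp add: lmul_def)

lemma lmul_zero_left: "lmul (\<lambda>i. 0) p = (\<lambda>i. 0)"
  by (simp add: lmul_def)

lemma cup00: "cup 0 0 (cochain0 p) (cochain0 p') = cochain0 (lmul p p')"
  by (auto simp: cup_def cochain0_def fun_eq_iff)

lemma der_val: "length as = 1 \<Longrightarrow> hd as \<noteq> 0 \<Longrightarrow> der p as = (\<lambda>i. (- of_int (hd as)) * p (i - (hd as - 1)))"
  by (simp add: der_def)

lemma cup01: "cup 0 1 (cochain0 p) (der p') = der (lmul p p')"
proof (intro ext)
  fix as i
  show "cup 0 1 (cochain0 p) (der p') as i = der (lmul p p') as i"
  proof (cases "length as = 1 \<and> hd as \<noteq> 0")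
    case True
    have "cup 0 1 (cochain0 p) (der p') as i = lmul p (der p' as) i"
      using True by (simp add: cup_def cochain0_def)
    also have "\<dots> = (- of_int (hd as)) * lmul p p' (i - (hd as - 1))"
      unfolding der_val[of as p', OF conjunct1[OF True] conjunct2[OF True]] lmul_scshift_right ..
    also have "\<dots> = der (lmul p p') as i" using True by (simp add: der_def)
    finally show ?thesis .
  next
    case False
    then show ?thesis by (auto simp: cup_def cochain0_def der_def lmul_zero_right)
  qed
qed

lemma cup10:
  assumes p: "p \<in> lps" and p': "p' \<in> lps"
  shows "cup 1 0 (der p') (cochain0 p) = der (lmul p p')"
proof (intro ext)
  fix as i
  show "cup 1 0 (der p') (cochain0 p) as i = der (lmul p p') as i"
  proof (cases "length as = 1 \<and> hd as \<noteq> 0")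
    case True
    have "cup 1 0 (der p') (cochain0 p) as i = lmul (der p' as) p i"
      using True by (simp add: cup_def cochain0_def)
    also have "\<dots> = (- of_int (hd as)) * lmul p' p (i - (hd as - 1))"
      unfolding der_val[of as p', OF conjunct1[OF True] conjunct2[OF True]] lmul_scshift_left[OF p'] ..
    also have "\<dots> = der (lmul p p') as i" using True by (simp add: der_def lmul_comm[OF p p'])
    finally show ?thesis .
  next
    case False
    then show ?thesis by (auto simp: cup_def cochain0_def der_def lmul_zero_left)
  qed
qed

lemma der_tpow0: "der (tpow 0) = yder"
  by (auto simp: der_def yder_def tpow_def fun_eq_iff)

lemma even_cons: "even ((x::int) * (x - 1))"
  by (cases "even x") auto

lemma tri_id: "(a + b) * (a + b - 1) div 2 = a * (a - 1) div 2 + b * (b - 1) div 2 + a * (b::int)"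
proof -
  obtain A where A: "a * (a - 1) = 2 * A" using even_cons[of a] by blast
  obtain B where B: "b * (b - 1) = 2 * B" using even_cons[of b] by blast
  have "(a + b) * (a + b - 1) = a * (a - 1) + b * (b - 1) + 2 * (a * b)" by (simp add: algebra_simps)
  then show ?thesis using A B by simp
qed

definition ccI :: "int \<Rightarrow> 'r::comm_ring_1" where
  "ccI j = - of_int (j * (j - 1) div 2)"

lemma ccI_id: "ccI a + ccI b - ccI (a + b) = (of_int (a * b) :: 'r::comm_ring_1)"
  unfolding ccI_def tri_id by (simp add: algebra_simps)

lemma cup11:
  assumes p: "p \<in> lps" and p': "p' \<in> lps"
  shows "coclass 2 (cup 1 1 (der p) (der p')) = coclass 2 (\<lambda>as i. 0 :: 'r::comm_ring_1)"
proof (rule coclass_eq)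
  define P where "P = lmul p p'"
  have P: "P \<in> lps" unfolding P_def by (rule lps_lmul[OF p p'])
  define hq :: "int list \<Rightarrow> int \<Rightarrow> 'r" where
    "hq = (\<lambda>as. if length as = 1 \<and> hd as \<noteq> 0 then (\<lambda>i. ccI (hd as) * P (i - (hd as - 2))) else (\<lambda>i. 0))"
  have hq: "hq \<in> cochains 1"
    unfolding cochains_def
  proof (intro CollectI conjI allI impI)
    fix as show "hq as \<in> lps" unfolding hq_def using lps_scshift[OF P] by auto
  next
    fix as assume "hq as \<noteq> (\<lambda>i. 0)" then show "length as = 1" by (auto simp: hq_def split: if_splits)
  next
    fix as assume "hq as \<noteq> (\<lambda>i. 0)"
    then have l: "length as = 1 \<and> hd as \<noteq> 0" by (auto simp: hq_def split: if_splits)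
    then obtain a where "as = [a]" by (metis One_nat_def length_0_conv length_Suc_conv)
    then show "\<forall>a\<in>set as. a \<noteq> 0" using l by simp
  qed
  have hq0: "hq [0] = (\<lambda>i. 0)" by (simp add: hq_def)
  have hqa: "hq [a] i = ccI a * P (i - (a - 2))" for a i
    by (cases "a = 0") (simp_all add: hq_def ccI_def)
  have eq: "cobd 1 hq = cup 1 1 (der p) (der p')"
  proof (intro ext)
    fix as i
    show "cobd 1 hq as i = cup 1 1 (der p) (der p') as i"
    proof (cases "length as = 2 \<and> (\<forall>a\<in>set as. a \<noteq> 0)")
      case True
      then obtain a b where ab: "as = [a, b]" "a \<noteq> 0" "b \<noteq> 0"
        by (metis (no_types) One_nat_def Suc_1 length_0_conv length_Suc_conv list.set_intros(1) list.set_intros(2))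
      have m: "mrg (Suc 0) [a, b] = [a + b]" by (simp add: mrg_def)
      have "cobd 1 hq as i = hq [b] (i - a) - hq [a + b] i + hq [a] (i - b)"
        using True by (simp add: cobd_eq cobdF_def ab m lshift_def)
      also have "\<dots> = (ccI a + ccI b - ccI (a + b)) * P (i - (a + b - 2))"
        unfolding hqa by (simp add: algebra_simps)
      also have "\<dots> = of_int (a * b) * P (i - (a + b - 2))" by (simp add: ccI_id)
      also have "\<dots> = (- of_int a) * ((- of_int b) * lmul p p' (i - (a - 1) - (b - 1)))"
        by (simp add: P_def algebra_simps)
      also have "\<dots> = lmul (der p [a]) (der p' [b]) i"
      proof -
        have l: "length [a] = 1" "length [b] = 1" by simp_all
        have h: "hd [a] \<noteq> 0" "hd [b] \<noteq> 0" using ab by simp_all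
        show ?thesis
          unfolding der_val[of "[a]" p, OF l(1) h(1)] der_val[of "[b]" p', OF l(2) h(2)]
            lmul_scshift_left[OF p] lmul_scshift_right by simp
      qed
      also have "\<dots> = cup 1 1 (der p) (der p') as i"
        using ab by (simp add: cup_def)
      finally show ?thesis .
    next
      case False
      have "cup 1 1 (der p) (der p') as i = 0"
      proof (cases "length as = 2")
        case True
        then obtain a b where ab: "as = [a, b]"
          by (metis (no_types) One_nat_def Suc_1 length_0_conv length_Suc_conv)
        then have "a = 0 \<or> b = 0" using False True by auto
        then show ?thesis using ab by (auto simp: cup_def der_def lmul_zero_left lmul_zero_right)
      next
        case False then show ?thesis by (simp add: cup_def)
      qed
      then show ?thesis using False by (auto simp: cobd_eq numeral_2_eq_2)
    qed
  qed
  have "(\<lambda>as i. cup 1 1 (der p) (der p') as i - 0) \<in> cobd 1 ` cochains 1"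
    by (rule rev_image_eqI[OF hq]) (simp only: diff_zero eq)
  then show "(\<lambda>as i. cup 1 1 (der p) (der p') as i - 0) \<in> coboundaries 2"
    by (simp add: coboundaries_def)
qed simp

lemma BHH_part:
  fixes u :: "'r::comm_ring_1"
  shows "BHH 1 (rhoHH u k 0 (coclass 0 (cochain0 (tpow i)))) = hclass 2 (\<lambda>v. 0 :: 'r)"
proof -
  let ?X = "hclass 1 (rho0 u k (tpow i)) :: (int list \<Rightarrow> 'r) set"
  have X: "rhoHH u k 0 (coclass 0 (cochain0 (tpow i))) = ?X"
    unfolding Phi0_single[OF lps_tpow] rhoHH0 ..
  have mem: "rho0 u k (tpow i) \<in> ?X"
    using rho0_chain[OF lps_tpow, of u k i] bnd_zero[of 1] by (simp add: hclass_def)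
  define x where "x = (SOME x. x \<in> ?X)"
  have xX: "x \<in> ?X" unfolding x_def using mem by (rule someI[where P = "\<lambda>x. x \<in> ?X"])
  then have xc: "x \<in> chains 1" by (simp add: hclass_def)
  have "BHH 1 ?X = hclass 2 (connesB 1 x)"
    by (simp add: BHH_def induced_def x_def)
  also have "\<dots> = hclass 2 (\<lambda>v. 0)"
    by (rule hclass_eq) (use B1_bnd[OF xc] in simp_all)
  finally show ?thesis unfolding X .
qed

lemma connesB_rho1: "connesB 0 (rho1 u k (tpow i)) = (\<lambda>v. - u * bas [k + i, 0] v)"
proof
  fix v
  let ?S = "{i'. tpow i i' \<noteq> (0::'a)}"
  have fS: "finite ?S" using lps_tpow[of i] by (simp add: lps_def)
  have "connesB 0 (rho1 u k (tpow i)) v = linext connesB_word (rho1 u k (tpow i)) v"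
    by (simp add: connesB_def)
  also have "\<dots> = (\<Sum>i'\<in>?S. (- u * tpow i i') * (if nrm [k + i'] then connesB_word [k + i'] v else 0))"
    unfolding rho1_def by (rule linext_fsum[OF fS])
  also have "\<dots> = (\<Sum>i'\<in>?S. (- u * tpow i i') * bas [k + i', 0] v)"
    by (rule sum.cong) (simp_all add: nrm1 Bw1)
  also have "\<dots> = (\<Sum>i'\<in>{i}. (- u * tpow i i') * bas [k + i', 0] v)"
    by (rule sum.mono_neutral_left) (auto simp: tpow_def split: if_splits)
  also have "\<dots> = - u * bas [k + i, 0] v" by (simp add: tpow_def)
  finally show "connesB 0 (rho1 u k (tpow i)) v = - u * bas [k + i, 0] v" .
qed

lemma Delta_part:
  fixes u :: "'r::comm_ring_1"
  assumes u: "u dvd 1"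
  shows "DeltaHH u k 1 (coclass 1 (der (tpow i))) = coclass 0 (cochain0 (lsmult (of_int (i + k)) (tpow (i - 1)) :: int \<Rightarrow> 'r))"
proof -
  define q :: "int \<Rightarrow> 'r" where "q = lsmult (of_int (i + k)) (tpow (i - 1))"
  have ql: "q \<in> lps" unfolding q_def by (rule lsmult_lps[OF lps_tpow])
  have r1: "rhoHH u k 1 (coclass 1 (der (tpow i))) = {rho1 u k (tpow i)}"
    unfolding Phi1_single[OF lps_tpow] rhoHH1[OF lps_tpow] ..
  have B0: "BHH 0 {rho1 u k (tpow i)} = hclass 1 (\<lambda>v. - u * bas [k + i, 0] v)"
    by (simp add: BHH_def induced_def connesB_rho1)
  have target: "rhoHH u k 0 (coclass 0 (cochain0 q)) = hclass 1 (rho0 u k q)"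
    unfolding Phi0_single[OF ql] rhoHH0 ..
  have rq: "rho0 u k q v = - u * (of_int (k + i) * bas [1, k + i + 0 - 1] v)" for v
  proof (cases "length v = 2 \<and> hd v = 1")
    case True
    then obtain a b where ab: "v = [a, b]" by (auto simp: length_Suc_conv numeral_2_eq_2)
    then have "a = 1" using True by simp
    then show ?thesis using rho0_val[OF ql, of u k v] ab
      by (auto simp: q_def lsmult_def tpow_def bas_alt nrm2 algebra_simps)
  next
    case False
    then have "bas [1, k + i + 0 - 1] v = (0::'r)" by (auto simp: bas_alt)
    then show ?thesis using rho0_val[OF ql, of u k v] False by simp
  qed
  have eqc: "hclass 1 (\<lambda>v. - u * bas [k + i, 0] v) = hclass 1 (rho0 u k q)"
  proof (rule hclass_eq)
    have "(\<lambda>v. - u * (bas [k + i, 0] v - of_int (k + i) * bas [1, k + i + 0 - 1] v)) \<in> (boundaries 1 :: (int list \<Rightarrow> 'r) set)"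
      by (rule bnd_scale[OF _ R1]) simp
    then show "(\<lambda>v. - u * bas [k + i, 0] v - rho0 u k q v) \<in> boundaries 1"
      unfolding rq by (simp add: algebra_simps)
  qed simp
  have inj: "inj_on (rhoHH u k 0) (HHco 0 :: (int list \<Rightarrow> int \<Rightarrow> 'r) set set)"
    using bij_rho[OF u, of k 0] by (simp add: bij_betw_def)
  have mem: "coclass 0 (cochain0 q) \<in> (HHco 0 :: (int list \<Rightarrow> int \<Rightarrow> 'r) set set)"
    using bij_Phi0[where 'r='r] ql by (auto simp: bij_betw_def)
  have "DeltaHH u k 1 (coclass 1 (der (tpow i))) = the_inv_into (HHco 0) (rhoHH u k 0) (BHH 0 (rhoHH u k 1 (coclass 1 (der (tpow i)))))"
    by (simp add: DeltaHH_def)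
  also have "\<dots> = the_inv_into (HHco 0) (rhoHH u k 0) (rhoHH u k 0 (coclass 0 (cochain0 q)))"
    unfolding r1 B0 target eqc ..
  also have "\<dots> = coclass 0 (cochain0 q)"
    by (rule the_inv_into_f_f[OF inj mem])
  finally show ?thesis unfolding q_def .
qed

theorem mainTheorem14:
  fixes u :: "'r::comm_ring_1" and k :: int
  assumes unit: "u dvd 1"
  shows
    "(\<forall>q. bij_betw (rhoHH u k q) (HHco q) (HHho (1 - int q))) \<and>
     (\<exists>\<Phi>0 \<Phi>1 :: (int \<Rightarrow> 'r) \<Rightarrow> (int list \<Rightarrow> int \<Rightarrow> 'r) set.
        bij_betw \<Phi>0 lps (HHco 0) \<and> bij_betw \<Phi>1 lps (HHco 1) \<and>
        (\<forall>p\<in>lps. \<forall>p'\<in>lps.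
            \<Phi>0 (\<lambda>i. p i + p' i) = addHH 0 (\<Phi>0 p) (\<Phi>0 p') \<and>
            \<Phi>1 (\<lambda>i. p i + p' i) = addHH 1 (\<Phi>1 p) (\<Phi>1 p')) \<and>
        (\<forall>r. \<forall>p\<in>lps. \<Phi>0 (lsmult r p) = smultHH 0 r (\<Phi>0 p) \<and>
                      \<Phi>1 (lsmult r p) = smultHH 1 r (\<Phi>1 p)) \<and>
        (\<forall>p\<in>lps. \<forall>p'\<in>lps.
            \<Phi>0 (lmul p p') = cupHH 0 0 (\<Phi>0 p) (\<Phi>0 p') \<and>
            \<Phi>1 (lmul p p') = cupHH 0 1 (\<Phi>0 p) (\<Phi>1 p') \<and>
            \<Phi>1 (lmul p p') = cupHH 1 0 (\<Phi>1 p') (\<Phi>0 p) \<and>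
            cupHH 1 1 (\<Phi>1 p) (\<Phi>1 p') = coclass 2 (\<lambda>as i. 0)) \<and>
        \<Phi>0 (tpow 1) = coclass 0 (cochain0 (tpow 1)) \<and>
        \<Phi>0 (tpow (-1)) = coclass 0 (cochain0 (tpow (-1))) \<and>
        \<Phi>1 (tpow 0) = coclass 1 yder \<and>
        (\<forall>i. BHH 1 (rhoHH u k 0 (\<Phi>0 (tpow i))) = hclass 2 (\<lambda>v. 0)) \<and>
        (\<forall>i. DeltaHH u k 1 (\<Phi>1 (tpow i)) = \<Phi>0 (lsmult (of_int (i + k)) (tpow (i - 1)))))"
proof -
  define \<Phi>0 :: "(int \<Rightarrow> 'r) \<Rightarrow> (int list \<Rightarrow> int \<Rightarrow> 'r) set" where "\<Phi>0 = (\<lambda>p. coclass 0 (cochain0 p))"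
  define \<Phi>1 :: "(int \<Rightarrow> 'r) \<Rightarrow> (int list \<Rightarrow> int \<Rightarrow> 'r) set" where "\<Phi>1 = (\<lambda>p. coclass 1 (der p))"
  have P0: "\<Phi>0 p = {cochain0 p}" if "p \<in> lps" for p unfolding \<Phi>0_def by (rule Phi0_single[OF that])
  have P1: "\<Phi>1 p = {der p}" if "p \<in> lps" for p unfolding \<Phi>1_def by (rule Phi1_single[OF that])
  have A: "\<forall>q. bij_betw (rhoHH u k q) (HHco q) (HHho (1 - int q))"
    using bij_rho[OF unit] by blast
  have B1: "bij_betw \<Phi>0 lps (HHco 0)" unfolding \<Phi>0_def by (rule bij_Phi0)
  have B2: "bij_betw \<Phi>1 lps (HHco 1)" unfolding \<Phi>1_def by (rule bij_Phi1)
  have C: "\<forall>p\<in>lps. \<forall>p'\<in>lps.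
            \<Phi>0 (\<lambda>i. p i + p' i) = addHH 0 (\<Phi>0 p) (\<Phi>0 p') \<and>
            \<Phi>1 (\<lambda>i. p i + p' i) = addHH 1 (\<Phi>1 p) (\<Phi>1 p')"
  proof (intro ballI conjI)
    fix p p' :: "int \<Rightarrow> 'r" assume p: "p \<in> lps" and p': "p' \<in> lps"
    show "\<Phi>0 (\<lambda>i. p i + p' i) = addHH 0 (\<Phi>0 p) (\<Phi>0 p')"
      unfolding P0[OF p] P0[OF p'] unfolding addHH_def some_single \<Phi>0_def cochain0_add ..
    show "\<Phi>1 (\<lambda>i. p i + p' i) = addHH 1 (\<Phi>1 p) (\<Phi>1 p')"
      unfolding P1[OF p] P1[OF p'] unfolding addHH_def some_single \<Phi>1_def der_add ..
  qed
  have D: "\<forall>r. \<forall>p\<in>lps. \<Phi>0 (lsmult r p) = smultHH 0 r (\<Phi>0 p) \<and>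
                      \<Phi>1 (lsmult r p) = smultHH 1 r (\<Phi>1 p)"
  proof (intro allI ballI conjI)
    fix r and p :: "int \<Rightarrow> 'r" assume p: "p \<in> lps"
    show "\<Phi>0 (lsmult r p) = smultHH 0 r (\<Phi>0 p)"
      unfolding P0[OF p] unfolding smultHH_def some_single \<Phi>0_def cochain0_smult ..
    show "\<Phi>1 (lsmult r p) = smultHH 1 r (\<Phi>1 p)"
      unfolding P1[OF p] unfolding smultHH_def some_single \<Phi>1_def der_smult ..
  qed
  have E: "\<forall>p\<in>lps. \<forall>p'\<in>lps.
            \<Phi>0 (lmul p p') = cupHH 0 0 (\<Phi>0 p) (\<Phi>0 p') \<and>
            \<Phi>1 (lmul p p') = cupHH 0 1 (\<Phi>0 p) (\<Phi>1 p') \<and>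
            \<Phi>1 (lmul p p') = cupHH 1 0 (\<Phi>1 p') (\<Phi>0 p) \<and>
            cupHH 1 1 (\<Phi>1 p) (\<Phi>1 p') = coclass 2 (\<lambda>as i. 0)"
  proof (intro ballI conjI)
    fix p p' :: "int \<Rightarrow> 'r" assume p: "p \<in> lps" and p': "p' \<in> lps"
    show "\<Phi>0 (lmul p p') = cupHH 0 0 (\<Phi>0 p) (\<Phi>0 p')"
      unfolding P0[OF p] P0[OF p'] unfolding cupHH_def some_single \<Phi>0_def cup00 add_0 ..
    show "\<Phi>1 (lmul p p') = cupHH 0 1 (\<Phi>0 p) (\<Phi>1 p')"
      unfolding P0[OF p] P1[OF p'] unfolding cupHH_def some_single \<Phi>1_def cup01 add_0 ..
    show "\<Phi>1 (lmul p p') = cupHH 1 0 (\<Phi>1 p') (\<Phi>0 p)"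
      unfolding P0[OF p] P1[OF p'] unfolding cupHH_def some_single \<Phi>1_def cup10[OF p p'] add_0_right ..
    show "cupHH 1 1 (\<Phi>1 p) (\<Phi>1 p') = coclass 2 (\<lambda>as i. 0)"
      unfolding P1[OF p] P1[OF p'] unfolding cupHH_def some_single one_add_one by (rule cup11[OF p p'])
  qed
  have F1: "\<Phi>0 (tpow 1) = coclass 0 (cochain0 (tpow 1))" by (simp add: \<Phi>0_def)
  have F2: "\<Phi>0 (tpow (-1)) = coclass 0 (cochain0 (tpow (-1)))" by (simp add: \<Phi>0_def)
  have F3: "\<Phi>1 (tpow 0) = coclass 1 yder" by (simp add: \<Phi>1_def der_tpow0)
  have G: "\<forall>i. BHH 1 (rhoHH u k 0 (\<Phi>0 (tpow i))) = hclass 2 (\<lambda>v. 0)"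
    unfolding \<Phi>0_def using BHH_part by blast
  have H: "\<forall>i. DeltaHH u k 1 (\<Phi>1 (tpow i)) = \<Phi>0 (lsmult (of_int (i + k)) (tpow (i - 1)))"
    unfolding \<Phi>0_def \<Phi>1_def using Delta_part[OF unit] by blast
  show ?thesis
    using A B1 B2 C D E F1 F2 F3 G H by blast
qed

end
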